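(* Let $\boldsymbol\omega^{\rm(init)}(\mathbf a)=\sum_{\mathbf p\in\mathbb Z^3}\widehat{\boldsymbol\omega}_{\mathbf p}e^{i\mathbf p\cdot\mathbf a}$ be a $2\pi$-periodic divergence-free zero-mean vector field on $\mathbb R^3$ with $\Gamma\equiv\sum_{\mathbf p}|\widehat{\boldsymbol\omega}_{\mathbf p}|<\infty$, and let $\boldsymbol\xi^{(s)}$, $s\ge1$, be the time-Taylor coefficients of the Lagrangian displacement defined in the context. Set $\widetilde T_c=1+\sqrt2-\sqrt{13/3}\approx0.3325$. Then $\sum_{s\ge1}\sum_{\mathbf p}|\mathbf p|\,|\widehat{\boldsymbol\xi}^{(s)}_{\mathbf p}|\,|t|^s<\infty$ for all complex $t$ with $|t|<\widetilde T_c/\Gamma$; in particular, for every $\mathbf a$ the series $\sum_{s\ge1}\boldsymbol\xi^{(s)}(\mathbf a)t^s$ converges in the disk $|t|<\widetilde T_c/\Gamma$.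
   Context: Lagrangian coordinates $\mathbf a$, $\nabla^{\rm L}$ the gradient in $\mathbf a$, $\varepsilon_{ijk}$ the Levi-Civita symbol, $\delta^s_1$ the Kronecker symbol, $\widehat f_{\mathbf p}$ the Fourier coefficients of a $2\pi$-periodic function. Let $\mathbf v^{\rm(init)}$ be the unique $2\pi$-periodic, zero-mean, divergence-free field with curl $\boldsymbol\omega^{\rm(init)}$. The coefficients $\boldsymbol\xi^{(s)}$ are the $2\pi$-periodic, zero-mean vector fields defined recursively by $\nabla^{\rm L}\times\boldsymbol\xi^{(s)}=\boldsymbol\omega^{\rm(init)}\delta^s_1-\sum_{k=1}^3\sum_{0<m<s}\frac{m}{s}\nabla^{\rm L}\xi^{(m)}_k\times\nabla^{\rm L}\xi^{(s-m)}_k$, $\nabla^{\rm L}\cdot\boldsymbol\xi^{(s)}=\sum_{1\le i<j\le3}\sum_{0<m<s}\big((\nabla^{\rm L}_j\xi^{(m)}_i)\nabla^{\rm L}_i\xi^{(s-m)}_j-(\nabla^{\rm L}_i\xi^{(m)}_i)\nabla^{\rm L}_j\xi^{(s-m)}_j\big)-\sum_{i,j,k}\sum_{l+m+n=s,\ l,m,n\ge1}\varepsilon_{ijk}(\nabla^{\rm L}_i\xi^{(l)}_1)(\nabla^{\rm L}_j\xi^{(m)}_2)\nabla^{\rm L}_k\xi^{(n)}_3$ (so $\boldsymbol\xi^{(1)}=\mathbf v^{\rm(init)}$); they are the time-Taylor coefficients of the displacement $\mathbf x(\mathbf a,t)-\mathbf a$ solving Cauchy's Lagrangian form of the incompressible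 Euler equations $\sum_k\nabla^{\rm L}\dot x_k\times\nabla^{\rm L}x_k=\boldsymbol\omega^{\rm(init)}$, $\det\nabla^{\rm L}\mathbf x=1$. *)

theory Defs
  imports "HOL-Analysis.Analysis"
begin

text \<open>Everything is expressed through Fourier coefficients on the lattice \<open>\<int>\<^sup>3\<close>.
  A 2pi-periodic vector field is represented by its coefficient map
  \<open>int^3 \<Rightarrow> complex^3\<close>; a scalar field by \<open>int^3 \<Rightarrow> complex\<close>.\<close>

type_synonym idx = "int ^ 3"
type_synonym vcoef = "idx \<Rightarrow> complex ^ 3"
type_synonym scoef = "idx \<Rightarrow> complex"

definition eps :: "3 \<Rightarrow> 3 \<Rightarrow> 3 \<Rightarrow> int" where
  "eps i j k =
     (if (i,j,k) \<in> {(1,2,3),(2,3,1),(3,1,2)} then 1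
      else if (i,j,k) \<in> {(1,3,2),(3,2,1),(2,1,3)} then -1 else 0)"

definition rvec :: "idx \<Rightarrow> real ^ 3" where
  "rvec p = (\<chi> k. of_int (p $ k))"

definition pdot :: "idx \<Rightarrow> real ^ 3 \<Rightarrow> real" where
  "pdot p a = (\<Sum>k\<in>UNIV. of_int (p $ k) * a $ k)"

text \<open>Fourier coefficients of a product of two periodic functions (convolution).\<close>
definition conv :: "scoef \<Rightarrow> scoef \<Rightarrow> scoef" where
  "conv f g p = (\<Sum>\<^sub>\<infinity>q. f q * g (p - q))"

text \<open>Fourier coefficients of \<open>\<nabla>\<^sub>j \<xi>\<^sub>i\<close>.\<close>
definition dcoef :: "vcoef \<Rightarrow> 3 \<Rightarrow> 3 \<Rightarrow> scoef" where
  "dcoef X i j p = \<i> * of_int (p $ j) * (X p $ i)"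

definition curl_hat :: "vcoef \<Rightarrow> vcoef" where
  "curl_hat X p = (\<chi> i. \<Sum>j\<in>UNIV. \<Sum>k\<in>UNIV. of_int (eps i j k) * dcoef X k j p)"

definition div_hat :: "vcoef \<Rightarrow> scoef" where
  "div_hat X p = (\<Sum>i\<in>UNIV. dcoef X i i p)"

definition curl_rhs :: "vcoef \<Rightarrow> (nat \<Rightarrow> vcoef) \<Rightarrow> nat \<Rightarrow> vcoef" where
  "curl_rhs \<omega> X s p =
     (if s = 1 then \<omega> p else 0)
     - (\<chi> i. \<Sum>k\<in>UNIV. \<Sum>m\<in>{0<..<s}. of_real (real m / real s) *
          (\<Sum>j\<in>UNIV. \<Sum>l\<in>UNIV. of_int (eps i j l) *
              conv (dcoef (X m) k j) (dcoef (X (s - m)) k l) p))"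

definition div_rhs :: "(nat \<Rightarrow> vcoef) \<Rightarrow> nat \<Rightarrow> scoef" where
  "div_rhs X s p =
     (\<Sum>(i,j)\<in>{(1,2),(1,3),(2,3)::3\<times>3}. \<Sum>m\<in>{0<..<s}.
         conv (dcoef (X m) i j) (dcoef (X (s - m)) j i) p
       - conv (dcoef (X m) i i) (dcoef (X (s - m)) j j) p)
     - (\<Sum>i\<in>UNIV. \<Sum>j\<in>UNIV. \<Sum>k\<in>UNIV.
         \<Sum>(l,m,n)\<in>{(l,m,n). 1 \<le> l \<and> 1 \<le> m \<and> 1 \<le> n \<and> l + m + n = s}.
           of_int (eps i j k) *
           conv (conv (dcoef (X l) 1 i) (dcoef (X m) 2 j)) (dcoef (X n) 3 k) p)"

definition field_at :: "vcoef \<Rightarrow> real ^ 3 \<Rightarrow> complex ^ 3" where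
  "field_at F a = (\<Sum>\<^sub>\<infinity>p. exp (\<i> * of_real (pdot p a)) *s F p)"

definition Tc_tilde :: real where
  "Tc_tilde = 1 + sqrt 2 - sqrt (13 / 3)"

end

theory Submission
  imports Defs
begin


lemma cmod2: "cmod z ^ 2 = Re z ^ 2 + Im z ^ 2" by (simp add: cmod_power2)
lemma csq: "complex_of_real (cmod z ^ 2) = z * cnj z" using complex_norm_square[of z] by simp

lemma normv2: "norm (a::complex^3) ^ 2 = cmod (a$1)^2 + cmod (a$2)^2 + cmod (a$3)^2"
  by (simp add: norm_vec_def L2_set_def sum_3)
lemma normr2: "norm (rvec p) ^ 2 = real_of_int (p$1)^2 + real_of_int (p$2)^2 + real_of_int (p$3)^2"
  by (simp add: norm_vec_def L2_set_def sum_3 rvec_def)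
lemma CS3: "cmod (x1*y1+x2*y2+x3*y3) ^ 2 \<le> (cmod x1^2+cmod x2^2+cmod x3^2)*(cmod y1^2+cmod y2^2+cmod y3^2)"
proof -
  have "cmod (x1*y1+x2*y2+x3*y3) \<le> cmod (x1*y1+x2*y2) + cmod (x3*y3)" by (rule norm_triangle_ineq)
  also have "\<dots> \<le> cmod (x1*y1) + cmod (x2*y2) + cmod (x3*y3)" using norm_triangle_ineq[of "x1*y1" "x2*y2"] by linarith
  finally have "cmod (x1*y1+x2*y2+x3*y3) \<le> cmod x1*cmod y1+cmod x2*cmod y2+cmod x3*cmod y3" by (simp add: norm_mult)
  hence "cmod (x1*y1+x2*y2+x3*y3)^2 \<le> (cmod x1*cmod y1+cmod x2*cmod y2+cmod x3*cmod y3)^2"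
    by (simp add: power_mono)
  also have "\<dots> \<le> (cmod x1^2+cmod x2^2+cmod x3^2)*(cmod y1^2+cmod y2^2+cmod y3^2)"
  proof -
    have "(cmod x1^2+cmod x2^2+cmod x3^2)*(cmod y1^2+cmod y2^2+cmod y3^2) - (cmod x1*cmod y1+cmod x2*cmod y2+cmod x3*cmod y3)^2
      = (cmod x1*cmod y2 - cmod x2*cmod y1)^2 + (cmod x1*cmod y3 - cmod x3*cmod y1)^2 + (cmod x2*cmod y3 - cmod x3*cmod y2)^2"
      by (simp add: power2_eq_square algebra_simps)
    moreover have "(cmod x1*cmod y2 - cmod x2*cmod y1)^2 + (cmod x1*cmod y3 - cmod x3*cmod y1)^2 + (cmod x2*cmod y3 - cmod x3*cmod y2)^2 \<ge> 0" by simp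
    ultimately show ?thesis by linarith
  qed
  finally show ?thesis .
qed

lemma cross_le: "cmod (a2*b3-a3*b2)^2 + cmod (a3*b1-a1*b3)^2 + cmod (a1*b2-a2*b1)^2
   \<le> (cmod a1^2+cmod a2^2+cmod a3^2)*(cmod b1^2+cmod b2^2+cmod b3^2)"
proof -
  have "complex_of_real ((cmod a1^2+cmod a2^2+cmod a3^2)*(cmod b1^2+cmod b2^2+cmod b3^2)
     - (cmod (a2*b3-a3*b2)^2 + cmod (a3*b1-a1*b3)^2 + cmod (a1*b2-a2*b1)^2))
     = complex_of_real (cmod (a1*cnj b1 + a2*cnj b2 + a3*cnj b3)^2)"
    unfolding of_real_mult of_real_add of_real_diff csq
    by (simp add: algebra_simps)
  hence "(cmod a1^2+cmod a2^2+cmod a3^2)*(cmod b1^2+cmod b2^2+cmod b3^2)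
     - (cmod (a2*b3-a3*b2)^2 + cmod (a3*b1-a1*b3)^2 + cmod (a1*b2-a2*b1)^2)
     = cmod (a1*cnj b1 + a2*cnj b2 + a3*cnj b3)^2" using of_real_eq_iff by blast
  moreover have "cmod (a1*cnj b1 + a2*cnj b2 + a3*cnj b3)^2 \<ge> 0" by simp
  ultimately show ?thesis by linarith
qed

definition dv :: "idx \<Rightarrow> complex^3 \<Rightarrow> 3 \<Rightarrow> 3 \<Rightarrow> complex" where
  "dv q a k j = \<i> * of_int (q $ j) * (a $ k)"

lemma L1sq: "norm (curl_hat Y p) ^ 2 + cmod (div_hat Y p) ^ 2 = norm (rvec p)^2 * norm (Y p)^2"
  unfolding normv2 normr2 cmod2
  apply (simp add: curl_hat_def div_hat_def dcoef_def sum_3 eps_def)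
  apply (simp add: power2_eq_square algebra_simps)
  done

definition Wq :: "real \<Rightarrow> complex^3 \<Rightarrow> complex^3 \<Rightarrow> idx \<Rightarrow> idx \<Rightarrow> (complex^3) \<times> complex" where
  "Wq \<mu> a b q v = ((\<chi> i. - (\<Sum>k\<in>UNIV. of_real \<mu> *
          (\<Sum>j\<in>UNIV. \<Sum>l\<in>UNIV. of_int (eps i j l) * (dv q a k j * dv v b k l)))),
     (\<Sum>(i,j)\<in>{(1,2),(1,3),(2,3)::3\<times>3}. dv q a i j * dv v b j i - dv q a i i * dv v b j j))"

definition dotc :: "complex^3 \<Rightarrow> complex^3 \<Rightarrow> complex" where
  "dotc a b = a$1*b$1 + a$2*b$2 + a$3*b$3"
definition crossc :: "complex^3 \<Rightarrow> complex^3 \<Rightarrow> complex^3" where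
  "crossc a b = vector [a$2*b$3-a$3*b$2, a$3*b$1-a$1*b$3, a$1*b$2-a$2*b$1]"
definition cvec :: "idx \<Rightarrow> complex^3" where "cvec q = (\<chi> k. of_int (q$k))"


lemma Wq_fst: "fst (Wq \<mu> a b q v + Wq (1-\<mu>) b a v q) = (\<chi> i. of_real (2*\<mu>-1) * (crossc (cvec q) (cvec v) $ i) * dotc a b)"
  unfolding Wq_def crossc_def cvec_def dotc_def dv_def
  apply (simp add: vec_eq_iff forall_3 sum_3 vector_def eps_def)
  apply (simp add: algebra_simps)
  done
lemma Wq_snd: "snd (Wq \<mu> a b q v + Wq (1-\<mu>) b a v q) = dotc (crossc a b) (crossc (cvec q) (cvec v))"
  unfolding Wq_def crossc_def cvec_def dotc_def dv_def
  apply (simp add: sum_3 vector_def eps_def)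
  apply (simp add: algebra_simps)
  done
lemma dotc_le: "cmod (dotc x y)^2 \<le> norm x^2 * norm y^2"
  unfolding dotc_def normv2 by (rule CS3)
lemma crossc_le: "norm (crossc x y)^2 \<le> norm x^2 * norm y^2"
  unfolding normv2 by (simp add: crossc_def vector_def cross_le)
lemma norm_cvec: "norm (cvec q) = norm (rvec q)"
proof -
  have "norm (cvec q)^2 = norm (rvec q)^2"
    unfolding normv2 normr2 by (simp add: cvec_def norm_of_int)
  thus ?thesis by (simp add: power2_eq_iff_nonneg)
qed
lemma d_sq: "(1 + (sqrt 2 - 1) * l)^2 \<ge> 1 + l^2" if "0 \<le> l" "l \<le> 1" for l :: real
proof -
  have "(1 + (sqrt 2 - 1) * l)^2 - (1 + l^2) = 2 * (sqrt 2 - 1) * l * (1 - l)"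
    by (simp add: power2_eq_square algebra_simps)
  moreover have "sqrt 2 - 1 \<ge> 0" by (simp add: real_le_rsqrt)
  ultimately show ?thesis using that by (smt (verit) mult_nonneg_nonneg)
qed

lemma L2: assumes "0 \<le> \<mu>" "\<mu> \<le> 1"
  shows "norm (Wq \<mu> a b q v + Wq (1-\<mu>) b a v q)
     \<le> (1 + (sqrt 2 - 1) * \<bar>2*\<mu>-1\<bar>) * (norm (rvec q) * norm (rvec v) * norm a * norm b)"
proof -
  define S where "S = Wq \<mu> a b q v + Wq (1-\<mu>) b a v q"
  define W where "W = crossc (cvec q) (cvec v)"
  define P where "P = norm (rvec q) * norm (rvec v) * norm a * norm b"
  have P0: "P \<ge> 0" unfolding P_def by simp
  have nW: "norm W^2 \<le> norm (rvec q)^2 * norm (rvec v)^2"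
    unfolding W_def using crossc_le[of "cvec q" "cvec v"] by (simp add: norm_cvec)
  have f: "norm (fst S)^2 = (2*\<mu>-1)^2 * norm W^2 * cmod (dotc a b)^2"
    unfolding S_def Wq_fst W_def normv2 by (simp only: vec_lambda_beta norm_mult norm_of_real power_mult_distrib power2_abs) (simp add: algebra_simps)
  have sn: "cmod (snd S)^2 \<le> norm (crossc a b)^2 * norm W^2"
    unfolding S_def Wq_snd W_def by (rule dotc_le)
  have "norm S^2 = norm (fst S)^2 + cmod (snd S)^2"
    by (cases S) (simp add: norm_Pair)
  also have "\<dots> \<le> (2*\<mu>-1)^2 * (norm (rvec q)^2 * norm (rvec v)^2) * (norm a^2 * norm b^2)
        + (norm a^2 * norm b^2) * (norm (rvec q)^2 * norm (rvec v)^2)"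
    unfolding f
    apply (rule add_mono)
    subgoal by (intro mult_mono nW dotc_le) auto
    subgoal using sn crossc_le[of a b] nW by (meson mult_mono order_trans zero_le_power2 mult_nonneg_nonneg)
    done
  also have "\<dots> = (1 + \<bar>2*\<mu>-1\<bar>^2) * P^2" unfolding P_def by (simp add: power_mult_distrib algebra_simps)
  also have "\<dots> \<le> (1 + (sqrt 2 - 1) * \<bar>2*\<mu>-1\<bar>)^2 * P^2"
    by (rule mult_right_mono[OF d_sq]) (use assms in auto)
  also have "\<dots> = ((1 + (sqrt 2 - 1) * \<bar>2*\<mu>-1\<bar>) * P)^2" by (simp add: power_mult_distrib)
  finally have "norm S^2 \<le> ((1 + (sqrt 2 - 1) * \<bar>2*\<mu>-1\<bar>) * P)^2" .
  moreover have "(1 + (sqrt 2 - 1) * \<bar>2*\<mu>-1\<bar>) * P \<ge> 0"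
    using P0 by (simp add: real_le_rsqrt)
  ultimately show ?thesis unfolding S_def P_def by (meson power2_le_imp_le)
qed

definition Tc :: "complex^3 \<Rightarrow> complex^3 \<Rightarrow> complex^3 \<Rightarrow> idx \<Rightarrow> idx \<Rightarrow> idx \<Rightarrow> complex" where
 "Tc a1 a2 a3 u1 u2 u3 = (\<Sum>i\<in>UNIV. \<Sum>j\<in>UNIV. \<Sum>k\<in>UNIV. of_int (eps i j k) * (dv u1 a1 1 i * dv u2 a2 2 j * dv u3 a3 3 k))"
definition Tsym where
 "Tsym a1 a2 a3 u1 u2 u3 = Tc a1 a2 a3 u1 u2 u3 + Tc a2 a1 a3 u2 u1 u3 + Tc a3 a2 a1 u3 u2 u1
   + Tc a1 a3 a2 u1 u3 u2 + Tc a2 a3 a1 u2 u3 u1 + Tc a3 a1 a2 u3 u1 u2"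
definition det3c where "det3c x1 x2 x3 = dotc x1 (crossc x2 x3)"
lemma Tc_expand: "Tc a1 a2 a3 u1 u2 u3 = - \<i> * (a1$1 * a2$2 * a3$3) * det3c (cvec u1) (cvec u2) (cvec u3)"
  unfolding Tc_def det3c_def dotc_def crossc_def cvec_def dv_def
  by (simp add: sum_3 eps_def vector_def algebra_simps)
lemma Tsym_eq: "Tsym a1 a2 a3 u1 u2 u3 = - \<i> * det3c a1 a2 a3 * det3c (cvec u1) (cvec u2) (cvec u3)"
  unfolding Tsym_def Tc_expand
  unfolding det3c_def dotc_def crossc_def cvec_def
  by (simp add: vector_def algebra_simps)


lemma le_infsum_single:
  fixes g :: "'a \<Rightarrow> real"
  assumes "g summable_on UNIV" "\<And>x. g x \<ge> 0"
  shows "g x \<le> infsum g UNIV"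
  using finite_sum_le_infsum[OF assms(1), of "{x}"] assms(2) by simp

lemma bij_shift: "bij_betw (\<lambda>(p,q). (q, p - q)) (UNIV::(idx\<times>idx) set) UNIV"
  by (rule bij_betw_byWitness[where f'="\<lambda>(q,v). (q+v, q)"]) auto

lemma prod_summable:
  fixes f g :: "'a \<Rightarrow> real"
  assumes f: "f summable_on UNIV" and g: "g summable_on UNIV" and f0: "\<And>x. f x \<ge> 0" and g0: "\<And>x. g x \<ge> 0"
  shows "(\<lambda>(q,v). f q * g v) summable_on (UNIV \<times> UNIV)"
    and "infsum (\<lambda>(q,v). f q * g v) (UNIV \<times> UNIV) = infsum f UNIV * infsum g UNIV"
proof -
  have sl: "((\<lambda>v. f q * g v) has_sum (f q * infsum g UNIV)) UNIV" for q
    by (rule has_sum_cmult_right) (use g in auto)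
  have out: "(\<lambda>q. f q * infsum g UNIV) summable_on UNIV"
    by (rule summable_on_cmult_left[OF f])
  show S: "(\<lambda>(q,v). f q * g v) summable_on (UNIV \<times> UNIV)"
    using summable_on_SigmaI[where f="\<lambda>(q,v). f q * g v" and A=UNIV and B="\<lambda>_. UNIV",
        OF _ out] sl f0 g0 by auto
  have "infsum (\<lambda>(q,v). f q * g v) (UNIV \<times> UNIV) = infsum (\<lambda>q. infsum (\<lambda>v. f q * g v) UNIV) UNIV"
    using infsum_Sigma_banach[OF S] by simp
  also have "\<dots> = infsum (\<lambda>q. f q * infsum g UNIV) UNIV"
    by (rule infsum_cong) (use sl infsumI in blast)
  also have "\<dots> = infsum f UNIV * infsum g UNIV"
    by (rule infsum_cmult_left) (use f in auto)
  finally show "infsum (\<lambda>(q,v). f q * g v) (UNIV \<times> UNIV) = infsum f UNIV * infsum g UNIV" .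
qed

lemma conv_nn:
  fixes f g :: "idx \<Rightarrow> real"
  assumes f: "f summable_on UNIV" and g: "g summable_on UNIV" and f0: "\<And>x. f x \<ge> 0" and g0: "\<And>x. g x \<ge> 0"
  shows "(\<lambda>q. f q * g (p - q)) summable_on UNIV"
    and "(\<lambda>p. infsum (\<lambda>q. f q * g (p - q)) UNIV) summable_on UNIV"
    and "infsum (\<lambda>p. infsum (\<lambda>q. f q * g (p - q)) UNIV) UNIV = infsum f UNIV * infsum g UNIV"
proof -
  show sl: "(\<lambda>q. f q * g (p - q)) summable_on UNIV" for p
  proof (rule summable_on_comparison_test[where f="\<lambda>q. f q * infsum g UNIV"])
    show "(\<lambda>q. f q * infsum g UNIV) summable_on UNIV" by (rule summable_on_cmult_left[OF f])
    show "f q * g (p - q) \<le> f q * infsum g UNIV" for q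
      by (rule mult_left_mono[OF le_infsum_single[OF g g0] f0])
  qed (use f0 g0 in auto)
  note P = prod_summable[OF f g f0 g0]
  have E: "(\<lambda>(p,q). f q * g (p - q)) = (\<lambda>x. (\<lambda>(q,v). f q * g v) ((\<lambda>(p,q). (q, p - q)) x))"
    by auto
  have S: "(\<lambda>(p,q). f q * g (p - q)) summable_on (UNIV \<times> UNIV)"
    unfolding E using summable_on_reindex_bij_betw[OF bij_shift, of "\<lambda>(q,v). f q * g v"] P(1)
    by simp
  show "(\<lambda>p. infsum (\<lambda>q. f q * g (p - q)) UNIV) summable_on UNIV"
    using summable_on_SigmaD[where f="\<lambda>(p,q). f q * g (p - q)" and A=UNIV and B="\<lambda>_. UNIV"] S sl by auto
  have "infsum (\<lambda>p. infsum (\<lambda>q. f q * g (p - q)) UNIV) UNIV = infsum (\<lambda>(p,q). f q * g (p - q)) (UNIV \<times> UNIV)"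
    using infsum_Sigma_banach[OF S] by simp
  also have "\<dots> = infsum (\<lambda>(q,v). f q * g v) (UNIV \<times> UNIV)"
    unfolding E using infsum_reindex_bij_betw[OF bij_shift, of "\<lambda>(q,v). f q * g v"] by simp
  finally show "infsum (\<lambda>p. infsum (\<lambda>q. f q * g (p - q)) UNIV) UNIV = infsum f UNIV * infsum g UNIV"
    using P(2) by simp
qed

lemma summable_cbound:
  fixes F :: "'a \<Rightarrow> complex" and f :: "'a \<Rightarrow> real"
  assumes "f summable_on A" "\<And>x. cmod (F x) \<le> f x"
  shows "F summable_on A"
proof -
  have f0: "f x \<ge> 0" for x using assms(2)[of x] norm_ge_zero[of "F x"] by linarith
  have "(\<lambda>x. norm (F x)) summable_on A"
    by (rule summable_on_comparison_test[OF assms(1)]) (use assms in auto)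
  thus ?thesis using summable_on_iff_abs_summable_on_complex by blast
qed

lemma conv_has_sum:
  fixes f g :: "idx \<Rightarrow> real"
  assumes f: "f summable_on UNIV" and g: "g summable_on UNIV" and f0: "\<And>x. f x \<ge> 0" and g0: "\<And>x. g x \<ge> 0"
    and bF: "\<And>q. cmod (F q) \<le> f q" and bG: "\<And>q. cmod (G q) \<le> g q"
  shows "((\<lambda>q. F q * G (p - q)) has_sum conv F G p) UNIV"
proof -
  have "(\<lambda>q. F q * G (p - q)) summable_on UNIV"
  proof (rule summable_cbound[OF conv_nn(1)[OF f g f0 g0, of p]])
    show "cmod (F q * G (p - q)) \<le> f q * g (p - q)" for q
      unfolding norm_mult by (intro mult_mono bF bG) (use f0 in auto)
  qed
  thus ?thesis unfolding conv_def by simp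
qed

lemma bij_shift2: "bij_betw (\<lambda>(q',q). (q, q' - q)) (UNIV::(idx\<times>idx) set) UNIV"
  by (rule bij_betw_byWitness[where f'="\<lambda>(q1,q2). (q1+q2, q1)"]) auto

lemma conv3:
  fixes f1 f2 f3 :: "idx \<Rightarrow> real"
  assumes s1: "f1 summable_on UNIV" and s2: "f2 summable_on UNIV" and s3: "f3 summable_on UNIV"
    and n1: "\<And>x. f1 x \<ge> 0" and n2: "\<And>x. f2 x \<ge> 0" and n3: "\<And>x. f3 x \<ge> 0"
  shows "(\<lambda>(q1,q2). f1 q1 * f2 q2 * f3 (p - q1 - q2)) summable_on UNIV"
    and "(\<lambda>p. infsum (\<lambda>(q1,q2). f1 q1 * f2 q2 * f3 (p - q1 - q2)) UNIV) summable_on UNIV"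
    and "infsum (\<lambda>p. infsum (\<lambda>(q1,q2). f1 q1 * f2 q2 * f3 (p - q1 - q2)) UNIV) UNIV
         = infsum f1 UNIV * infsum f2 UNIV * infsum f3 UNIV"
proof -
  note P = prod_summable[OF s1 s2 n1 n2]
  show S: "(\<lambda>(q1,q2). f1 q1 * f2 q2 * f3 (p - q1 - q2)) summable_on UNIV" for p
  proof (rule summable_on_comparison_test[where f="\<lambda>(q1,q2). (f1 q1 * f2 q2) * infsum f3 UNIV"])
    show "(\<lambda>(q1,q2). (f1 q1 * f2 q2) * infsum f3 UNIV) summable_on UNIV"
      using summable_on_cmult_left[OF P(1), of "infsum f3 UNIV"] by (simp add: case_prod_unfold)
    show "(case x of (q1, q2) \<Rightarrow> f1 q1 * f2 q2 * f3 (p - q1 - q2)) \<le> (case x of (q1, q2) \<Rightarrow> f1 q1 * f2 q2 * infsum f3 UNIV)" for x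
      by (cases x) (simp, intro mult_left_mono le_infsum_single[OF s3 n3], use n1 n2 in auto)
    show "0 \<le> (case x of (q1, q2) \<Rightarrow> f1 q1 * f2 q2 * f3 (p - q1 - q2))" for x
      by (cases x) (use n1 n2 n3 in auto)
  qed
  define c23 where "c23 x = infsum (\<lambda>q. f2 q * f3 (x - q)) UNIV" for x
  note C23 = conv_nn[OF s2 s3 n2 n3]
  have c23s: "c23 summable_on UNIV" using C23(2) unfolding c23_def by simp
  have c230: "c23 x \<ge> 0" for x unfolding c23_def by (intro infsum_nonneg) (use n2 n3 in auto)
  have eq: "infsum (\<lambda>(q1,q2). f1 q1 * f2 q2 * f3 (p - q1 - q2)) UNIV = infsum (\<lambda>q1. f1 q1 * c23 (p - q1)) UNIV" for p
  proof -
    have "infsum (\<lambda>(q1,q2). f1 q1 * f2 q2 * f3 (p - q1 - q2)) UNIV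
        = infsum (\<lambda>q1. infsum (\<lambda>q2. f1 q1 * f2 q2 * f3 (p - q1 - q2)) UNIV) UNIV"
      using infsum_Sigma_banach[of "\<lambda>(q1,q2). f1 q1 * f2 q2 * f3 (p - q1 - q2)" UNIV "\<lambda>_. UNIV"] S[of p] by simp
    also have "\<dots> = infsum (\<lambda>q1. f1 q1 * c23 (p - q1)) UNIV"
    proof (rule infsum_cong)
      fix q1
      have "infsum (\<lambda>q2. f1 q1 * f2 q2 * f3 (p - q1 - q2)) UNIV = infsum (\<lambda>q2. f1 q1 * (f2 q2 * f3 ((p - q1) - q2))) UNIV"
        by (simp add: mult.assoc diff_diff_eq)
      also have "\<dots> = f1 q1 * c23 (p - q1)" unfolding c23_def by (rule infsum_cmult_right) (use C23(1) in auto)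
      finally show "infsum (\<lambda>q2. f1 q1 * f2 q2 * f3 (p - q1 - q2)) UNIV = f1 q1 * c23 (p - q1)" .
    qed
    finally show ?thesis .
  qed
  note C = conv_nn[OF s1 c23s n1 c230]
  show "(\<lambda>p. infsum (\<lambda>(q1,q2). f1 q1 * f2 q2 * f3 (p - q1 - q2)) UNIV) summable_on UNIV"
    unfolding eq by (rule C(2))
  show "infsum (\<lambda>p. infsum (\<lambda>(q1,q2). f1 q1 * f2 q2 * f3 (p - q1 - q2)) UNIV) UNIV
         = infsum f1 UNIV * infsum f2 UNIV * infsum f3 UNIV"
    unfolding eq C(3) using C23(3) unfolding c23_def by simp
qed

lemma conv3_has_sum:
  fixes f1 f2 f3 :: "idx \<Rightarrow> real"
  assumes s1: "f1 summable_on UNIV" and s2: "f2 summable_on UNIV" and s3: "f3 summable_on UNIV"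
    and n1: "\<And>x. f1 x \<ge> 0" and n2: "\<And>x. f2 x \<ge> 0" and n3: "\<And>x. f3 x \<ge> 0"
    and b1: "\<And>q. cmod (F1 q) \<le> f1 q" and b2: "\<And>q. cmod (F2 q) \<le> f2 q" and b3: "\<And>q. cmod (F3 q) \<le> f3 q"
  shows "((\<lambda>(q1,q2). F1 q1 * F2 q2 * F3 (p - q1 - q2)) has_sum conv (conv F1 F2) F3 p) UNIV"
proof -
  define H where "H = (\<lambda>(q1,q2). F1 q1 * F2 q2 * F3 (p - q1 - q2))"
  have HS: "H summable_on UNIV"
  proof (rule summable_cbound[OF conv3(1)[OF s1 s2 s3 n1 n2 n3, of p]])
    show "cmod (H x) \<le> (case x of (q1, q2) \<Rightarrow> f1 q1 * f2 q2 * f3 (p - q1 - q2))" for x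
      unfolding H_def by (cases x) (simp add: norm_mult, intro mult_mono b1 b2 b3, use n1 n2 n3 in auto)
  qed
  have E: "(\<lambda>(q',q). F1 q * F2 (q' - q) * F3 (p - q')) = (\<lambda>x. H ((\<lambda>(q',q). (q, q' - q)) x))"
    unfolding H_def by auto
  have PS: "(\<lambda>(q',q). F1 q * F2 (q' - q) * F3 (p - q')) summable_on (UNIV \<times> UNIV)"
    unfolding E using summable_on_reindex_bij_betw[OF bij_shift2, of H] HS by simp
  have "conv (conv F1 F2) F3 p = infsum (\<lambda>q'. infsum (\<lambda>q. F1 q * F2 (q' - q) * F3 (p - q')) UNIV) UNIV"
    unfolding conv_def
  proof (rule infsum_cong)
    fix q'
    show "(\<Sum>\<^sub>\<infinity>q. F1 q * F2 (q' - q)) * F3 (p - q') = (\<Sum>\<^sub>\<infinity>q. F1 q * F2 (q' - q) * F3 (p - q'))"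
      by (rule infsum_cmult_left[symmetric]) (use conv_has_sum[OF s1 s2 n1 n2 b1 b2, of q'] in \<open>auto simp: has_sum_iff\<close>)
  qed
  also have "\<dots> = infsum (\<lambda>(q',q). F1 q * F2 (q' - q) * F3 (p - q')) (UNIV \<times> UNIV)"
    using infsum_Sigma_banach[OF PS] by simp
  also have "\<dots> = infsum H UNIV"
    unfolding E using infsum_reindex_bij_betw[OF bij_shift2, of H] by simp
  finally show ?thesis using HS unfolding H_def by (simp add: has_sum_iff)
qed




lemma has_sum_finsum:
  fixes f :: "'i \<Rightarrow> 'a \<Rightarrow> 'b::topological_comm_monoid_add"
  assumes "finite I" "\<And>i. i \<in> I \<Longrightarrow> (f i has_sum S i) A"
  shows "((\<lambda>x. \<Sum>i\<in>I. f i x) has_sum (\<Sum>i\<in>I. S i)) A"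
  using assms
proof (induction I rule: finite_induct)
  case empty then show ?case by simp
next
  case (insert a F)
  have "(f a has_sum S a) A" using insert by simp
  moreover have "((\<lambda>x. \<Sum>i\<in>F. f i x) has_sum sum S F) A" using insert by simp
  ultimately show ?case using insert by (simp add: has_sum_add)
qed

lemma has_sum_vec:
  fixes f :: "'a \<Rightarrow> 'b::topological_comm_monoid_add ^ 'n"
  assumes "\<And>i. ((\<lambda>x. f x $ i) has_sum S $ i) A"
  shows "(f has_sum S) A"
proof -
  have "((\<lambda>F. \<chi> i. sum (\<lambda>x. f x $ i) F) \<longlongrightarrow> (\<chi> i. S $ i)) (finite_subsets_at_top A)"
    by (rule tendsto_vec_lambda) (use assms in \<open>simp add: has_sum_def\<close>)
  moreover have "(\<lambda>F. \<chi> i. sum (\<lambda>x. f x $ i) F) = sum f"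
    by (auto simp: vec_eq_iff sum_component)
  ultimately show ?thesis by (simp add: has_sum_def)
qed

lemma has_sum_Pair:
  assumes "((\<lambda>x. fst (f x)) has_sum a) A" "((\<lambda>x. snd (f x)) has_sum b) A"
  shows "(f has_sum (a, b)) A"
proof -
  have "((\<lambda>F. (sum (\<lambda>x. fst (f x)) F, sum (\<lambda>x. snd (f x)) F)) \<longlongrightarrow> (a, b)) (finite_subsets_at_top A)"
    by (rule tendsto_Pair) (use assms in \<open>simp_all add: has_sum_def\<close>)
  moreover have "(\<lambda>F. (sum (\<lambda>x. fst (f x)) F, sum (\<lambda>x. snd (f x)) F)) = sum f"
    by (auto simp: fst_sum snd_sum prod_eq_iff)
  ultimately show ?thesis by (simp add: has_sum_def)
qed

lemma dcoef_dv: "dcoef X k j q = dv q (X q) k j"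
  by (simp add: dcoef_def dv_def)

lemma dv_le: "cmod (dv q a k j) \<le> norm (rvec q) * norm a"
proof -
  have "norm (rvec q $ j) \<le> norm (rvec q)" by (rule Finite_Cartesian_Product.norm_nth_le)
  hence "\<bar>real_of_int (q$j)\<bar> \<le> norm (rvec q)" by (simp add: rvec_def)
  moreover have "cmod (a$k) \<le> norm a" by (rule Finite_Cartesian_Product.norm_nth_le)
  ultimately show ?thesis unfolding dv_def norm_mult
    by (simp add: norm_of_int mult_mono)
qed

lemma det3c_le: "cmod (det3c x1 x2 x3) \<le> norm x1 * norm x2 * norm x3"
proof -
  have "cmod (det3c x1 x2 x3)^2 \<le> norm x1^2 * norm (crossc x2 x3)^2"
    unfolding det3c_def by (rule dotc_le)
  also have "\<dots> \<le> norm x1^2 * (norm x2^2 * norm x3^2)"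
    by (intro mult_left_mono crossc_le) auto
  finally have "cmod (det3c x1 x2 x3)^2 \<le> (norm x1 * norm x2 * norm x3)^2"
    by (simp add: power_mult_distrib)
  thus ?thesis by (meson power2_le_imp_le mult_nonneg_nonneg norm_ge_zero)
qed

lemma Tsym_le: "cmod (Tsym a1 a2 a3 u1 u2 u3)
   \<le> (norm (rvec u1) * norm a1) * (norm (rvec u2) * norm a2) * (norm (rvec u3) * norm a3)"
proof -
  have "cmod (Tsym a1 a2 a3 u1 u2 u3) = cmod (det3c a1 a2 a3) * cmod (det3c (cvec u1) (cvec u2) (cvec u3))"
    unfolding Tsym_eq by (simp add: norm_mult)
  also have "\<dots> \<le> (norm a1 * norm a2 * norm a3) * (norm (cvec u1) * norm (cvec u2) * norm (cvec u3))"
    by (intro mult_mono det3c_le) auto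
  finally show ?thesis by (simp add: norm_cvec algebra_simps)
qed



definition nf :: "(nat \<Rightarrow> vcoef) \<Rightarrow> nat \<Rightarrow> idx \<Rightarrow> real" where
  "nf X s p = norm (rvec p) * norm (X s p)"

lemma nf_nonneg: "nf X s p \<ge> 0" by (simp add: nf_def)

lemma dcoef_le: "cmod (dcoef (X m) k j q) \<le> nf X m q"
  unfolding dcoef_dv nf_def by (rule dv_le)

lemma has_sum_diff':
  fixes f g :: "'a \<Rightarrow> complex"
  assumes "(f has_sum a) A" "(g has_sum b) A"
  shows "((\<lambda>x. f x - g x) has_sum (a - b)) A"
  using has_sum_add[OF assms(1) has_sum_uminusI[OF assms(2)]] by simp

definition Yq :: "(nat \<Rightarrow> vcoef) \<Rightarrow> nat \<Rightarrow> idx \<Rightarrow> idx \<Rightarrow> (complex^3) \<times> complex" where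
  "Yq X s p q = (\<Sum>m\<in>{0<..<s}. Wq (real m / real s) (X m q) (X (s - m) (p - q)) q (p - q))"

definition qdiv :: "(nat \<Rightarrow> vcoef) \<Rightarrow> nat \<Rightarrow> idx \<Rightarrow> complex" where
  "qdiv X s p = (\<Sum>(i,j)\<in>{(1,2),(1,3),(2,3)::3\<times>3}. \<Sum>m\<in>{0<..<s}.
         conv (dcoef (X m) i j) (dcoef (X (s - m)) j i) p
       - conv (dcoef (X m) i i) (dcoef (X (s - m)) j j) p)"

lemma conv_pair_has_sum:
  assumes "\<And>m. 1 \<le> m \<Longrightarrow> m < s \<Longrightarrow> nf X m summable_on UNIV" "m \<in> {0<..<s}"
  shows "((\<lambda>q. dcoef (X m) k j q * dcoef (X (s - m)) k' l (p - q)) has_sum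
           conv (dcoef (X m) k j) (dcoef (X (s - m)) k' l) p) UNIV"
  by (rule conv_has_sum[OF assms(1) assms(1) nf_nonneg nf_nonneg dcoef_le dcoef_le]) (use assms(2) in auto)

lemma QS:
  assumes s2: "s \<ge> 2" and sm: "\<And>m. 1 \<le> m \<Longrightarrow> m < s \<Longrightarrow> nf X m summable_on UNIV"
  shows "(Yq X s p has_sum (curl_rhs \<omega> X s p, qdiv X s p)) UNIV"
proof (rule has_sum_Pair)
  note H = conv_pair_has_sum[OF sm]
  show "((\<lambda>q. fst (Yq X s p q)) has_sum curl_rhs \<omega> X s p) UNIV"
  proof (rule has_sum_vec)
    fix i
    have "((\<lambda>q. - (\<Sum>k\<in>UNIV. \<Sum>m\<in>{0<..<s}. of_real (real m / real s) *
          (\<Sum>j\<in>UNIV. \<Sum>l\<in>UNIV. of_int (eps i j l) *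
              (dcoef (X m) k j q * dcoef (X (s - m)) k l (p - q))))) has_sum
          - (\<Sum>k\<in>UNIV. \<Sum>m\<in>{0<..<s}. of_real (real m / real s) *
          (\<Sum>j\<in>UNIV. \<Sum>l\<in>UNIV. of_int (eps i j l) *
              conv (dcoef (X m) k j) (dcoef (X (s - m)) k l) p))) UNIV"
      apply (intro has_sum_uminusI has_sum_finsum finite_UNIV finite_greaterThanLessThan has_sum_cmult_right)
      by (auto intro: H)
    moreover have "curl_rhs \<omega> X s p $ i = - (\<Sum>k\<in>UNIV. \<Sum>m\<in>{0<..<s}. of_real (real m / real s) *
          (\<Sum>j\<in>UNIV. \<Sum>l\<in>UNIV. of_int (eps i j l) *
              conv (dcoef (X m) k j) (dcoef (X (s - m)) k l) p))"
      using s2 by (simp add: curl_rhs_def)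
    moreover have "fst (Yq X s p q) $ i = - (\<Sum>k\<in>UNIV. \<Sum>m\<in>{0<..<s}. of_real (real m / real s) *
          (\<Sum>j\<in>UNIV. \<Sum>l\<in>UNIV. of_int (eps i j l) *
              (dcoef (X m) k j q * dcoef (X (s - m)) k l (p - q))))" for q
      unfolding Yq_def Wq_def fst_sum sum_component dcoef_dv
      by (simp add: sum_negf) (rule sum.swap)
    ultimately show "((\<lambda>q. fst (Yq X s p q) $ i) has_sum curl_rhs \<omega> X s p $ i) UNIV"
      by simp
  qed
  show "((\<lambda>q. snd (Yq X s p q)) has_sum qdiv X s p) UNIV"
  proof -
    have "((\<lambda>q. \<Sum>(i,j)\<in>{(1,2),(1,3),(2,3)::3\<times>3}. \<Sum>m\<in>{0<..<s}.
         dcoef (X m) i j q * dcoef (X (s - m)) j i (p - q)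
       - dcoef (X m) i i q * dcoef (X (s - m)) j j (p - q)) has_sum qdiv X s p) UNIV"
      unfolding qdiv_def case_prod_unfold
      apply (intro has_sum_finsum finite.intros has_sum_diff')
      by (auto intro: H)
    moreover have "snd (Yq X s p q) = (\<Sum>(i,j)\<in>{(1,2),(1,3),(2,3)::3\<times>3}. \<Sum>m\<in>{0<..<s}.
         dcoef (X m) i j q * dcoef (X (s - m)) j i (p - q)
       - dcoef (X m) i i q * dcoef (X (s - m)) j j (p - q))" for q
      unfolding Yq_def Wq_def snd_sum dcoef_dv snd_conv case_prod_unfold
      by (rule sum.swap)
    ultimately show ?thesis by simp
  qed
qed



definition kap :: "nat \<Rightarrow> real" where "kap s = sqrt 2 / 2 - (sqrt 2 - 1) / real s"

lemma kap_bound: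
  assumes "1 \<le> m" "m < s"
  shows "1 + (sqrt 2 - 1) * \<bar>2 * (real m / real s) - 1\<bar> \<le> 2 * kap s"
proof -
  have s0: "real s > 0" using assms by simp
  have "\<bar>2 * (real m / real s) - 1\<bar> = \<bar>2 * real m - real s\<bar> / real s"
    using s0 by (simp add: field_simps)
  also have "\<dots> \<le> (real s - 2) / real s"
    using assms s0 by (intro divide_right_mono) auto
  finally have "\<bar>2 * (real m / real s) - 1\<bar> \<le> 1 - 2 / real s" using s0 by (simp add: field_simps)
  moreover have "sqrt 2 - 1 \<ge> 0" by (simp add: real_le_rsqrt)
  ultimately have "1 + (sqrt 2 - 1) * \<bar>2 * (real m / real s) - 1\<bar> \<le> 1 + (sqrt 2 - 1) * (1 - 2 / real s)"
    by (simp add: mult_left_mono)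
  also have "\<dots> = 2 * kap s" unfolding kap_def by (simp add: algebra_simps)
  finally show ?thesis .
qed

lemma bij_neg: "bij_betw (\<lambda>q. p - q) (UNIV::idx set) UNIV"
  by (rule bij_betw_byWitness[where f'="\<lambda>q. p - q"]) auto

lemma QB:
  assumes s2: "s \<ge> 2" and sm: "\<And>m. 1 \<le> m \<Longrightarrow> m < s \<Longrightarrow> nf X m summable_on UNIV"
  shows "norm (curl_rhs \<omega> X s p, qdiv X s p)
     \<le> kap s * (\<Sum>m\<in>{0<..<s}. infsum (\<lambda>q. nf X m q * nf X (s - m) (p - q)) UNIV)"
proof -
  define T where "T = (curl_rhs \<omega> X s p, qdiv X s p)"
  have Y: "(Yq X s p has_sum T) UNIV" unfolding T_def by (rule QS[OF s2 sm])
  have Y': "((\<lambda>q. Yq X s p (p - q)) has_sum T) UNIV"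
    using has_sum_reindex_bij_betw[OF bij_neg[of p], of "Yq X s p" T] Y by simp
  have YY: "((\<lambda>q. Yq X s p q + Yq X s p (p - q)) has_sum (T + T)) UNIV"
    by (rule has_sum_add[OF Y Y'])
  have eqY': "Yq X s p (p - q) = (\<Sum>m\<in>{0<..<s}. Wq (1 - real m / real s) (X (s - m) (p - q)) (X m q) (p - q) q)" for q
  proof -
    have "Yq X s p (p - q) = (\<Sum>m\<in>{0<..<s}. Wq (real m / real s) (X m (p - q)) (X (s - m) q) (p - q) q)"
      unfolding Yq_def by simp
    also have "\<dots> = (\<Sum>m\<in>{0<..<s}. Wq (real (s - m) / real s) (X (s - m) (p - q)) (X (s - (s - m)) q) (p - q) q)"
      by (rule sum.reindex_bij_witness[where i="\<lambda>m. s - m" and j="\<lambda>m. s - m"]) auto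
    also have "\<dots> = (\<Sum>m\<in>{0<..<s}. Wq (1 - real m / real s) (X (s - m) (p - q)) (X m q) (p - q) q)"
      using s2 by (intro sum.cong refl) (auto simp: of_nat_diff field_simps)
    finally show ?thesis .
  qed
  define B where "B = (\<Sum>m\<in>{0<..<s}. infsum (\<lambda>q. nf X m q * nf X (s - m) (p - q)) UNIV)"
  have BS: "((\<lambda>q. \<Sum>m\<in>{0<..<s}. 2 * kap s * (nf X m q * nf X (s - m) (p - q))) has_sum (2 * kap s * B)) UNIV"
    unfolding B_def sum_distrib_left
    apply (intro has_sum_finsum finite_greaterThanLessThan has_sum_cmult_right)
    apply (subst has_sum_iff)
    using conv_nn(1)[OF sm sm nf_nonneg nf_nonneg] by auto
  have pt: "norm (Yq X s p q + Yq X s p (p - q)) \<le> (\<Sum>m\<in>{0<..<s}. 2 * kap s * (nf X m q * nf X (s - m) (p - q)))" for q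
  proof -
    have "norm (Yq X s p q + Yq X s p (p - q)) = norm (\<Sum>m\<in>{0<..<s}. Wq (real m / real s) (X m q) (X (s - m) (p - q)) q (p - q)
            + Wq (1 - real m / real s) (X (s - m) (p - q)) (X m q) (p - q) q)"
      by (simp only: eqY') (simp add: Yq_def sum.distrib)
    also have "\<dots> \<le> (\<Sum>m\<in>{0<..<s}. norm (Wq (real m / real s) (X m q) (X (s - m) (p - q)) q (p - q)
            + Wq (1 - real m / real s) (X (s - m) (p - q)) (X m q) (p - q) q))"
      by (rule norm_sum)
    also have "\<dots> \<le> (\<Sum>m\<in>{0<..<s}. 2 * kap s * (nf X m q * nf X (s - m) (p - q)))"
    proof (rule sum_mono)
      fix m assume m: "m \<in> {0<..<s}"
      have mu: "0 \<le> real m / real s" "real m / real s \<le> 1" using m by auto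
      have "norm (Wq (real m / real s) (X m q) (X (s - m) (p - q)) q (p - q)
            + Wq (1 - real m / real s) (X (s - m) (p - q)) (X m q) (p - q) q)
          \<le> (1 + (sqrt 2 - 1) * \<bar>2 * (real m / real s) - 1\<bar>) * (norm (rvec q) * norm (rvec (p - q)) * norm (X m q) * norm (X (s - m) (p - q)))"
        by (rule L2[OF mu])
      also have "\<dots> \<le> 2 * kap s * (norm (rvec q) * norm (rvec (p - q)) * norm (X m q) * norm (X (s - m) (p - q)))"
        by (rule mult_right_mono[OF kap_bound]) (use m in auto)
      finally show "norm (Wq (real m / real s) (X m q) (X (s - m) (p - q)) q (p - q)
            + Wq (1 - real m / real s) (X (s - m) (p - q)) (X m q) (p - q) q)
          \<le> 2 * kap s * (nf X m q * nf X (s - m) (p - q))"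
        by (simp add: nf_def algebra_simps)
    qed
    finally show ?thesis .
  qed
  have "norm (T + T) \<le> 2 * kap s * B"
    by (rule norm_infsum_le[OF YY BS]) (use pt in auto)
  moreover have "norm (T + T) = 2 * norm T"
  proof -
    have "T + T = (2::real) *\<^sub>R T" by (simp add: scaleR_2)
    thus ?thesis by simp
  qed
  ultimately have "2 * norm T \<le> 2 * kap s * B" by simp
  thus ?thesis unfolding T_def B_def by simp
qed



definition Comp :: "nat \<Rightarrow> (nat \<times> nat \<times> nat) set" where
  "Comp s = {(l,m,n). 1 \<le> l \<and> 1 \<le> m \<and> 1 \<le> n \<and> l + m + n = s}"

lemma finite_Comp: "finite (Comp s)"
  by (rule finite_subset[of _ "{..s} \<times> {..s} \<times> {..s}"]) (auto simp: Comp_def)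

definition cdiv :: "(nat \<Rightarrow> vcoef) \<Rightarrow> nat \<Rightarrow> idx \<Rightarrow> complex" where
  "cdiv X s p = (\<Sum>i\<in>UNIV. \<Sum>j\<in>UNIV. \<Sum>k\<in>UNIV. \<Sum>(l,m,n)\<in>Comp s.
           of_int (eps i j k) * conv (conv (dcoef (X l) 1 i) (dcoef (X m) 2 j)) (dcoef (X n) 3 k) p)"

lemma div_split: "div_rhs X s p = qdiv X s p - cdiv X s p"
  unfolding div_rhs_def qdiv_def cdiv_def Comp_def by (rule refl)

definition Fc :: "(nat \<Rightarrow> vcoef) \<Rightarrow> idx \<Rightarrow> nat \<times> nat \<times> nat \<Rightarrow> idx \<times> idx \<Rightarrow> complex" where
  "Fc X p c x = (case c of (l,m,n) \<Rightarrow> case x of (q1,q2) \<Rightarrow>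
      Tc (X l q1) (X m q2) (X n (p - q1 - q2)) q1 q2 (p - q1 - q2))"

definition Zc :: "(nat \<Rightarrow> vcoef) \<Rightarrow> nat \<Rightarrow> idx \<Rightarrow> idx \<times> idx \<Rightarrow> complex" where
  "Zc X s p x = (\<Sum>c\<in>Comp s. Fc X p c x)"

lemma sum_swap4: "(\<Sum>i\<in>A. \<Sum>j\<in>B. \<Sum>k\<in>C. \<Sum>c\<in>D. f i j k c) = (\<Sum>c\<in>D. \<Sum>i\<in>A. \<Sum>j\<in>B. \<Sum>k\<in>C. f i j k c)"
proof -
  have "(\<Sum>i\<in>A. \<Sum>j\<in>B. \<Sum>k\<in>C. \<Sum>c\<in>D. f i j k c) = (\<Sum>i\<in>A. \<Sum>j\<in>B. \<Sum>c\<in>D. \<Sum>k\<in>C. f i j k c)"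
    by (intro sum.cong refl sum.swap)
  also have "\<dots> = (\<Sum>i\<in>A. \<Sum>c\<in>D. \<Sum>j\<in>B. \<Sum>k\<in>C. f i j k c)"
    by (intro sum.cong refl sum.swap)
  also have "\<dots> = (\<Sum>c\<in>D. \<Sum>i\<in>A. \<Sum>j\<in>B. \<Sum>k\<in>C. f i j k c)"
    by (rule sum.swap)
  finally show ?thesis .
qed

lemma CS:
  assumes sm: "\<And>m. 1 \<le> m \<Longrightarrow> m < s \<Longrightarrow> nf X m summable_on UNIV"
  shows "(Zc X s p has_sum cdiv X s p) UNIV"
proof -
  have H: "((\<lambda>(q1,q2). dcoef (X l) 1 i q1 * dcoef (X m) 2 j q2 * dcoef (X n) 3 k (p - q1 - q2)) has_sum
      conv (conv (dcoef (X l) 1 i) (dcoef (X m) 2 j)) (dcoef (X n) 3 k) p) UNIV"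
    if "(l,m,n) \<in> Comp s" for l m n i j k
  proof -
    have "1 \<le> l" "l < s" "1 \<le> m" "m < s" "1 \<le> n" "n < s" using that by (auto simp: Comp_def)
    thus ?thesis
      by (rule conv3_has_sum[OF sm sm sm nf_nonneg nf_nonneg nf_nonneg dcoef_le dcoef_le dcoef_le])
  qed
  have "((\<lambda>x. \<Sum>i\<in>UNIV. \<Sum>j\<in>UNIV. \<Sum>k\<in>UNIV. \<Sum>c\<in>Comp s. of_int (eps i j k) *
      (case c of (l,m,n) \<Rightarrow> (case x of (q1,q2) \<Rightarrow> dcoef (X l) 1 i q1 * dcoef (X m) 2 j q2 * dcoef (X n) 3 k (p - q1 - q2))))
     has_sum cdiv X s p) UNIV"
  proof -
    have Hc: "((\<lambda>x. of_int (eps i j k) *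
      (case c of (l,m,n) \<Rightarrow> (case x of (q1,q2) \<Rightarrow> dcoef (X l) 1 i q1 * dcoef (X m) 2 j q2 * dcoef (X n) 3 k (p - q1 - q2))))
      has_sum (case c of (l,m,n) \<Rightarrow> of_int (eps i j k) * conv (conv (dcoef (X l) 1 i) (dcoef (X m) 2 j)) (dcoef (X n) 3 k) p)) UNIV"
      if "c \<in> Comp s" for i j k c
    proof (cases c)
      case (fields l m n)
      show ?thesis unfolding fields using H[of l m n i j k] that fields
        by (simp add: has_sum_cmult_right case_prod_unfold)
    qed
    show ?thesis unfolding cdiv_def
      by (intro has_sum_finsum finite_Comp finite_UNIV Hc) simp_all
  qed
  moreover have "(\<Sum>i\<in>UNIV. \<Sum>j\<in>UNIV. \<Sum>k\<in>UNIV. \<Sum>c\<in>Comp s. of_int (eps i j k) *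
      (case c of (l,m,n) \<Rightarrow> (case x of (q1,q2) \<Rightarrow> dcoef (X l) 1 i q1 * dcoef (X m) 2 j q2 * dcoef (X n) 3 k (p - q1 - q2))))
      = Zc X s p x" for x
    unfolding Zc_def
  proof (subst sum_swap4, rule sum.cong[OF refl])
    fix c show "(\<Sum>i\<in>UNIV. \<Sum>j\<in>UNIV. \<Sum>k\<in>UNIV. of_int (eps i j k) *
      (case c of (l,m,n) \<Rightarrow> (case x of (q1,q2) \<Rightarrow> dcoef (X l) 1 i q1 * dcoef (X m) 2 j q2 * dcoef (X n) 3 k (p - q1 - q2))))
      = Fc X p c x"
      by (cases c; cases x) (simp add: Fc_def Tc_def dcoef_dv)
  qed
  ultimately show ?thesis by simp
qed



lemma perm_has_sum:
  assumes "bij_betw \<sigma> (Comp s) (Comp s)" "bij_betw \<pi> (UNIV::(idx\<times>idx) set) UNIV" "(Zc X s p has_sum S) UNIV"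
  shows "((\<lambda>x. \<Sum>c\<in>Comp s. Fc X p (\<sigma> c) (\<pi> x)) has_sum S) UNIV"
proof -
  have "(\<lambda>x. \<Sum>c\<in>Comp s. Fc X p (\<sigma> c) (\<pi> x)) = (\<lambda>x. Zc X s p (\<pi> x))"
    unfolding Zc_def using sum.reindex_bij_betw[OF assms(1), of "\<lambda>c. Fc X p c (\<pi> _)"] by auto
  thus ?thesis using has_sum_reindex_bij_betw[OF assms(2), of "Zc X s p" S] assms(3) by simp
qed

lemma ar:
  fixes p q1 q2 :: idx
  shows "p - (p - q1 - q2) - q2 = q1" "p - q1 - (p - q1 - q2) = q2" "p - q2 - (p - q1 - q2) = q1"
        "p - (p - q1 - q2) - q1 = q2" "p - q2 - q1 = p - q1 - q2"
  by (simp_all add: algebra_simps)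

definition "s12 = (\<lambda>(l::nat,m::nat,n::nat). (m,l,n))"
definition "s13 = (\<lambda>(l::nat,m::nat,n::nat). (n,m,l))"
definition "s23 = (\<lambda>(l::nat,m::nat,n::nat). (l,n,m))"
definition "s123 = (\<lambda>(l::nat,m::nat,n::nat). (m,n,l))"
definition "s132 = (\<lambda>(l::nat,m::nat,n::nat). (n,l,m))"
definition "p12 = (\<lambda>(q1::idx,q2::idx). (q2,q1))"
definition "p13 p = (\<lambda>(q1::idx,q2::idx). (p - q1 - q2,q2))"
definition "p23 p = (\<lambda>(q1::idx,q2::idx). (q1,p - q1 - q2))"
definition "p123 p = (\<lambda>(q1::idx,q2::idx). (q2,p - q1 - q2))"
definition "p132 p = (\<lambda>(q1::idx,q2::idx). (p - q1 - q2,q1))"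

lemma bijs:
  "bij_betw s12 (Comp s) (Comp s)" "bij_betw s13 (Comp s) (Comp s)" "bij_betw s23 (Comp s) (Comp s)"
  "bij_betw s123 (Comp s) (Comp s)" "bij_betw s132 (Comp s) (Comp s)"
  "bij_betw p12 UNIV UNIV" "bij_betw (p13 p) UNIV UNIV" "bij_betw (p23 p) UNIV UNIV"
  "bij_betw (p123 p) UNIV UNIV" "bij_betw (p132 p) UNIV UNIV"
  unfolding s12_def s13_def s23_def s123_def s132_def p12_def p13_def p23_def p123_def p132_def
  apply (rule bij_betw_byWitness[where f'="\<lambda>(l,m,n). (m,l,n)"]; force simp: Comp_def)
  apply (rule bij_betw_byWitness[where f'="\<lambda>(l,m,n). (n,m,l)"]; force simp: Comp_def)
  apply (rule bij_betw_byWitness[where f'="\<lambda>(l,m,n). (l,n,m)"]; force simp: Comp_def)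
  apply (rule bij_betw_byWitness[where f'="\<lambda>(l,m,n). (n,l,m)"]; force simp: Comp_def)
  apply (rule bij_betw_byWitness[where f'="\<lambda>(l,m,n). (m,n,l)"]; force simp: Comp_def)
  apply (rule bij_betw_byWitness[where f'="\<lambda>(q1,q2). (q2,q1)"]; force)
  apply (rule bij_betw_byWitness[where f'="\<lambda>(q1,q2). (p - q1 - q2,q2)"]; force simp: ar)
  apply (rule bij_betw_byWitness[where f'="\<lambda>(q1,q2). (q1,p - q1 - q2)"]; force simp: ar)
  apply (rule bij_betw_byWitness[where f'="\<lambda>(q1,q2). (p - q1 - q2,q1)"]; force simp: ar)
  apply (rule bij_betw_byWitness[where f'="\<lambda>(q1,q2). (q2,p - q1 - q2)"]; force simp: ar)
  done



definition nf3 :: "(nat \<Rightarrow> vcoef) \<Rightarrow> idx \<Rightarrow> nat \<times> nat \<times> nat \<Rightarrow> idx \<times> idx \<Rightarrow> real" where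
  "nf3 X p c x = (case c of (l,m,n) \<Rightarrow> case x of (q1,q2) \<Rightarrow> nf X l q1 * nf X m q2 * nf X n (p - q1 - q2))"

lemma six_sum: "Fc X p c x + Fc X p (s12 c) (p12 x) + Fc X p (s13 c) (p13 p x) + Fc X p (s23 c) (p23 p x)
   + Fc X p (s123 c) (p123 p x) + Fc X p (s132 c) (p132 p x)
   = (case c of (l,m,n) \<Rightarrow> case x of (q1,q2) \<Rightarrow> Tsym (X l q1) (X m q2) (X n (p - q1 - q2)) q1 q2 (p - q1 - q2))"
  by (cases c; cases x) (simp add: Fc_def Tsym_def s12_def s13_def s23_def s123_def s132_def
        p12_def p13_def p23_def p123_def p132_def ar)

lemma CB:
  assumes sm: "\<And>m. 1 \<le> m \<Longrightarrow> m < s \<Longrightarrow> nf X m summable_on UNIV"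
  shows "cmod (cdiv X s p) \<le> (1/6) * (\<Sum>c\<in>Comp s. infsum (nf3 X p c) UNIV)"
proof -
  define S where "S = cdiv X s p"
  note Z = CS[OF sm, of s p, folded S_def]
  note P = perm_has_sum[OF _ _ Z]
  have all: "((\<lambda>x. Zc X s p x + (\<Sum>c\<in>Comp s. Fc X p (s12 c) (p12 x)) + (\<Sum>c\<in>Comp s. Fc X p (s13 c) (p13 p x))
     + (\<Sum>c\<in>Comp s. Fc X p (s23 c) (p23 p x)) + (\<Sum>c\<in>Comp s. Fc X p (s123 c) (p123 p x))
     + (\<Sum>c\<in>Comp s. Fc X p (s132 c) (p132 p x))) has_sum (S + S + S + S + S + S)) UNIV"
    by (intro has_sum_add Z P bijs)
  have eq: "Zc X s p x + (\<Sum>c\<in>Comp s. Fc X p (s12 c) (p12 x)) + (\<Sum>c\<in>Comp s. Fc X p (s13 c) (p13 p x))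
     + (\<Sum>c\<in>Comp s. Fc X p (s23 c) (p23 p x)) + (\<Sum>c\<in>Comp s. Fc X p (s123 c) (p123 p x))
     + (\<Sum>c\<in>Comp s. Fc X p (s132 c) (p132 p x))
     = (\<Sum>c\<in>Comp s. case c of (l,m,n) \<Rightarrow> case x of (q1,q2) \<Rightarrow> Tsym (X l q1) (X m q2) (X n (p - q1 - q2)) q1 q2 (p - q1 - q2))" for x
    unfolding Zc_def six_sum[symmetric] by (simp add: sum.distrib)
  have bnd: "((\<lambda>x. \<Sum>c\<in>Comp s. nf3 X p c x) has_sum (\<Sum>c\<in>Comp s. infsum (nf3 X p c) UNIV)) UNIV"
  proof (intro has_sum_finsum finite_Comp)
    fix c assume c: "c \<in> Comp s"
    obtain l m n where cl: "c = (l,m,n)" by (cases c)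
    have "1 \<le> l" "l < s" "1 \<le> m" "m < s" "1 \<le> n" "n < s" using c cl by (auto simp: Comp_def)
    hence "nf3 X p c summable_on UNIV" unfolding cl nf3_def
      using conv3(1)[OF sm sm sm nf_nonneg nf_nonneg nf_nonneg, of l m n p] by (simp add: case_prod_unfold)
    thus "(nf3 X p c has_sum infsum (nf3 X p c) UNIV) UNIV" by simp
  qed
  have pt: "norm (\<Sum>c\<in>Comp s. case c of (l,m,n) \<Rightarrow> case x of (q1,q2) \<Rightarrow> Tsym (X l q1) (X m q2) (X n (p - q1 - q2)) q1 q2 (p - q1 - q2))
      \<le> (\<Sum>c\<in>Comp s. nf3 X p c x)" for x
  proof -
    have "norm (\<Sum>c\<in>Comp s. case c of (l,m,n) \<Rightarrow> case x of (q1,q2) \<Rightarrow> Tsym (X l q1) (X m q2) (X n (p - q1 - q2)) q1 q2 (p - q1 - q2))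
      \<le> (\<Sum>c\<in>Comp s. norm (case c of (l,m,n) \<Rightarrow> case x of (q1,q2) \<Rightarrow> Tsym (X l q1) (X m q2) (X n (p - q1 - q2)) q1 q2 (p - q1 - q2)))"
      by (rule norm_sum)
    also have "\<dots> \<le> (\<Sum>c\<in>Comp s. nf3 X p c x)"
    proof (rule sum_mono)
      fix c show "norm (case c of (l,m,n) \<Rightarrow> case x of (q1,q2) \<Rightarrow> Tsym (X l q1) (X m q2) (X n (p - q1 - q2)) q1 q2 (p - q1 - q2))
           \<le> nf3 X p c x"
        by (cases c; cases x) (simp add: nf3_def nf_def Tsym_le)
    qed
    finally show ?thesis .
  qed
  have "norm (S + S + S + S + S + S) \<le> (\<Sum>c\<in>Comp s. infsum (nf3 X p c) UNIV)"
    by (rule norm_infsum_le[OF all bnd]) (use pt eq in auto)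
  moreover have "S + S + S + S + S + S = 6 * S" by simp
  ultimately show ?thesis unfolding S_def by (simp add: norm_mult)
qed



lemma kap_nonneg: "s \<ge> 1 \<Longrightarrow> kap s \<ge> 0"
proof -
  assume s: "s \<ge> 1"
  have a0: "sqrt 2 - 1 \<ge> 0" by (simp add: real_le_rsqrt)
  have a1: "(sqrt 2 - 1) / real s \<le> (sqrt 2 - 1) / 1"
    using s a0 by (intro divide_left_mono) auto
  have a: "(sqrt 2 - 1) / real s \<le> sqrt 2 - 1" using a1 by simp
  have h: "sqrt 2 * sqrt 2 = 2" by simp
  have h0: "sqrt 2 \<ge> 0" by simp
  have "sqrt 2 \<le> 2" using sqrt2_less_2 by simp
  hence "sqrt 2 - 1 \<le> sqrt 2 / 2" by simp
  thus ?thesis using a unfolding kap_def by linarith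
qed

lemma nf_pair:
  "nf X s p = norm (curl_hat (X s) p, div_hat (X s) p)"
proof -
  have "nf X s p ^ 2 = norm (curl_hat (X s) p, div_hat (X s) p) ^ 2"
    unfolding norm_Pair nf_def using L1sq[of "X s" p] by (simp add: power_mult_distrib)
  thus ?thesis by (simp add: nf_def power2_eq_iff_nonneg)
qed

lemma STEP:
  assumes s2: "s \<ge> 2" and sm: "\<And>m. 1 \<le> m \<Longrightarrow> m < s \<Longrightarrow> nf X m summable_on UNIV"
    and curl: "\<And>p. p \<noteq> 0 \<Longrightarrow> curl_hat (X s) p = curl_rhs \<omega> X s p"
    and dv: "\<And>p. p \<noteq> 0 \<Longrightarrow> div_hat (X s) p = div_rhs X s p"
  shows "nf X s summable_on UNIV"
    and "infsum (nf X s) UNIV \<le> kap s * (\<Sum>m\<in>{0<..<s}. infsum (nf X m) UNIV * infsum (nf X (s - m)) UNIV)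
          + (1/6) * (\<Sum>c\<in>Comp s. case c of (l,m,n) \<Rightarrow> infsum (nf X l) UNIV * infsum (nf X m) UNIV * infsum (nf X n) UNIV)"
proof -
  define Bq where "Bq p = (\<Sum>m\<in>{0<..<s}. infsum (\<lambda>q. nf X m q * nf X (s - m) (p - q)) UNIV)" for p
  define Bc where "Bc p = (\<Sum>c\<in>Comp s. infsum (nf3 X p c) UNIV)" for p
  define TQ where "TQ = (\<Sum>m\<in>{0<..<s}. infsum (nf X m) UNIV * infsum (nf X (s - m)) UNIV)"
  define TC where "TC = (\<Sum>c\<in>Comp s. case c of (l,m,n) \<Rightarrow> infsum (nf X l) UNIV * infsum (nf X m) UNIV * infsum (nf X n) UNIV)"
  have hBq: "(Bq has_sum TQ) UNIV"
    unfolding Bq_def TQ_def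
  proof (intro has_sum_finsum finite_greaterThanLessThan)
    fix m assume m: "m \<in> {0<..<s}"
    note C = conv_nn[OF sm sm nf_nonneg nf_nonneg, of m "s - m"]
    show "((\<lambda>p. infsum (\<lambda>q. nf X m q * nf X (s - m) (p - q)) UNIV) has_sum (infsum (nf X m) UNIV * infsum (nf X (s - m)) UNIV)) UNIV"
      using C m by (auto simp: has_sum_iff)
  qed
  have hBc: "(Bc has_sum TC) UNIV"
    unfolding Bc_def TC_def
  proof (intro has_sum_finsum finite_Comp)
    fix c assume c: "c \<in> Comp s"
    obtain l m n where cl: "c = (l,m,n)" by (cases c)
    have r: "1 \<le> l" "l < s" "1 \<le> m" "m < s" "1 \<le> n" "n < s" using c cl by (auto simp: Comp_def)
    note C = conv3[OF sm sm sm nf_nonneg nf_nonneg nf_nonneg, of l m n]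
    have e: "nf3 X p c = (\<lambda>(q1,q2). nf X l q1 * nf X m q2 * nf X n (p - q1 - q2))" for p
      unfolding cl nf3_def by simp
    show "((\<lambda>p. infsum (nf3 X p c) UNIV) has_sum (case c of (l,m,n) \<Rightarrow> infsum (nf X l) UNIV * infsum (nf X m) UNIV * infsum (nf X n) UNIV)) UNIV"
      unfolding e using C r cl by (auto simp: has_sum_iff)
  qed
  have Bq0: "Bq p \<ge> 0" for p unfolding Bq_def
    by (intro sum_nonneg infsum_nonneg) (auto intro: mult_nonneg_nonneg nf_nonneg)
  have Bc0: "Bc p \<ge> 0" for p unfolding Bc_def
    by (intro sum_nonneg infsum_nonneg) (auto simp: nf3_def split: prod.splits intro!: mult_nonneg_nonneg nf_nonneg)
  have k0: "kap s \<ge> 0" using s2 by (intro kap_nonneg) auto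
  have pt: "nf X s p \<le> kap s * Bq p + (1/6) * Bc p" for p
  proof (cases "p = 0")
    case True
    have "rvec 0 = 0" by (simp add: rvec_def vec_eq_iff)
    then show ?thesis using Bq0 Bc0 k0 True by (simp add: nf_def)
  next
    case False
    have "nf X s p = norm (curl_rhs \<omega> X s p, qdiv X s p - cdiv X s p)"
      unfolding nf_pair curl[OF False] dv[OF False] div_split ..
    also have "(curl_rhs \<omega> X s p, qdiv X s p - cdiv X s p) = (curl_rhs \<omega> X s p, qdiv X s p) - (0, cdiv X s p)"
      by simp
    also have "norm \<dots> \<le> norm (curl_rhs \<omega> X s p, qdiv X s p) + norm ((0::complex^3), cdiv X s p)"
      by (rule norm_triangle_ineq4)
    also have "\<dots> \<le> kap s * Bq p + (1/6) * Bc p"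
      unfolding norm_Pair1 Bq_def Bc_def by (intro add_mono QB[OF s2 sm] CB[OF sm])
    finally show ?thesis .
  qed
  have hR: "((\<lambda>p. kap s * Bq p + (1/6) * Bc p) has_sum (kap s * TQ + (1/6) * TC)) UNIV"
    by (intro has_sum_add has_sum_cmult_right hBq hBc)
  show S: "nf X s summable_on UNIV"
    by (rule summable_on_comparison_test[OF has_sum_imp_summable[OF hR]]) (use pt nf_nonneg in auto)
  have "infsum (nf X s) UNIV \<le> infsum (\<lambda>p. kap s * Bq p + (1/6) * Bc p) UNIV"
    by (rule infsum_mono[OF S has_sum_imp_summable[OF hR]]) (use pt in auto)
  also have "\<dots> = kap s * TQ + (1/6) * TC" using hR by (simp add: has_sum_iff)
  finally show "infsum (nf X s) UNIV \<le> kap s * (\<Sum>m\<in>{0<..<s}. infsum (nf X m) UNIV * infsum (nf X (s - m)) UNIV)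
          + (1/6) * (\<Sum>c\<in>Comp s. case c of (l,m,n) \<Rightarrow> infsum (nf X l) UNIV * infsum (nf X m) UNIV * infsum (nf X n) UNIV)"
    unfolding TQ_def TC_def .
qed



function bm :: "real \<Rightarrow> nat \<Rightarrow> real" where
 "bm G s = (if s = 0 then 0 else if s = 1 then G else
     kap s * (\<Sum>m\<in>{0<..<s}. bm G m * bm G (s - m))
   + (1/6) * (\<Sum>c\<in>Comp s. bm G (fst c) * bm G (fst (snd c)) * bm G (snd (snd c))))"
  by auto
termination
proof (relation "Wellfounded.measure (\<lambda>(G,s). s)")
  show "wf (Wellfounded.measure (\<lambda>(G,s). s))" by simp
qed (auto simp: Comp_def)

declare bm.simps[simp del]

lemma bm_0: "bm G 0 = 0" by (simp add: bm.simps)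
lemma bm_1: "bm G 1 = G" by (simp add: bm.simps)
lemma bm_Suc0: "bm G (Suc 0) = G" by (simp add: bm.simps)
lemma bm_ge2: "s \<ge> 2 \<Longrightarrow> bm G s = kap s * (\<Sum>m\<in>{0<..<s}. bm G m * bm G (s - m))
   + (1/6) * (\<Sum>c\<in>Comp s. bm G (fst c) * bm G (fst (snd c)) * bm G (snd (snd c)))"
  by (subst bm.simps) auto

lemma bm_nonneg: "G \<ge> 0 \<Longrightarrow> bm G s \<ge> 0"
proof (induction s rule: less_induct)
  case (less s)
  show ?case
  proof (cases "s \<ge> 2")
    case True
    have "kap s \<ge> 0" using True by (intro kap_nonneg) auto
    moreover have "(\<Sum>m\<in>{0<..<s}. bm G m * bm G (s - m)) \<ge> 0"
      by (intro sum_nonneg mult_nonneg_nonneg less) (use less.prems in auto)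
    moreover have "(\<Sum>c\<in>Comp s. bm G (fst c) * bm G (fst (snd c)) * bm G (snd (snd c))) \<ge> 0"
      by (intro sum_nonneg mult_nonneg_nonneg less) (use less.prems in \<open>auto simp: Comp_def\<close>)
    ultimately show ?thesis unfolding bm_ge2[OF True] by simp
  next
    case False
    then have "s = 0 \<or> s = 1" by auto
    then show ?thesis using less.prems by (auto simp: bm_0 bm_1 bm_Suc0)
  qed
qed

lemma Comp_2: "Comp 2 = {}" by (auto simp: Comp_def)
lemma Comp_3: "Comp 3 = {(1,1,1)}" by (auto simp: Comp_def)

lemma bm_2: "bm G 2 = G^2 / 2"
proof -
  have "{0<..<2::nat} = {1}" by auto
  hence "bm G 2 = kap 2 * (G * G)" by (simp add: bm_ge2 Comp_2 bm_1 bm_Suc0)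
  moreover have "kap 2 = 1/2" by (simp add: kap_def field_simps)
  ultimately show ?thesis by (simp add: power2_eq_square)
qed



lemma sumA:
  fixes u :: "nat \<Rightarrow> real"
  assumes u0: "\<And>n. u n \<ge> 0"
  shows "(\<Sum>s\<in>{2..N}. \<Sum>m\<in>{0<..<s}. u m * u (s - m)) \<le> (\<Sum>s\<in>{1..N-1}. u s)^2"
proof -
  define S2 where "S2 = Sigma {2..N} (\<lambda>s. {0<..<s})"
  define h where "h = (\<lambda>x::nat\<times>nat. (snd x, fst x - snd x))"
  have inj: "inj_on h S2" unfolding inj_on_def h_def S2_def by auto
  have sub: "h ` S2 \<subseteq> {1..N-1} \<times> {1..N-1}" unfolding h_def S2_def by auto
  have "(\<Sum>s\<in>{2..N}. \<Sum>m\<in>{0<..<s}. u m * u (s - m)) = (\<Sum>x\<in>S2. (\<lambda>(m,n). u m * u n) (h x))"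
    unfolding S2_def h_def by (subst sum.Sigma) (auto simp: case_prod_unfold)
  also have "\<dots> = (\<Sum>y\<in>h ` S2. (\<lambda>(m,n). u m * u n) y)"
    using sum.reindex[OF inj, of "\<lambda>(m,n). u m * u n"] by simp
  also have "\<dots> \<le> (\<Sum>y\<in>{1..N-1} \<times> {1..N-1}. (\<lambda>(m,n). u m * u n) y)"
    by (rule sum_mono2[OF _ sub]) (auto intro: mult_nonneg_nonneg u0)
  also have "\<dots> = (\<Sum>s\<in>{1..N-1}. u s)^2"
    by (simp add: power2_eq_square sum_product sum.cartesian_product)
  finally show ?thesis .
qed

lemma sumB:
  fixes u :: "nat \<Rightarrow> real"
  assumes u0: "\<And>n. u n \<ge> 0"
  shows "(\<Sum>s\<in>{2..N}. \<Sum>c\<in>Comp s. u (fst c) * u (fst (snd c)) * u (snd (snd c))) \<le> (\<Sum>s\<in>{1..N-1}. u s)^3"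
proof -
  define S3 where "S3 = Sigma {2..N} Comp"
  define h where "h = (\<lambda>x::nat\<times>nat\<times>nat\<times>nat. snd x)"
  have inj: "inj_on h S3" unfolding inj_on_def h_def S3_def by (auto simp: Comp_def)
  have sub: "h ` S3 \<subseteq> {1..N-1} \<times> {1..N-1} \<times> {1..N-1}" unfolding h_def S3_def by (auto simp: Comp_def)
  define g where "g = (\<lambda>c::nat\<times>nat\<times>nat. u (fst c) * u (fst (snd c)) * u (snd (snd c)))"
  have "(\<Sum>s\<in>{2..N}. \<Sum>c\<in>Comp s. u (fst c) * u (fst (snd c)) * u (snd (snd c))) = (\<Sum>x\<in>S3. g (h x))"
    unfolding S3_def h_def g_def by (subst sum.Sigma) (auto simp: finite_Comp case_prod_unfold)
  also have "\<dots> = (\<Sum>y\<in>h ` S3. g y)"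
    using sum.reindex[OF inj, of g] by simp
  also have "\<dots> \<le> (\<Sum>y\<in>{1..N-1} \<times> {1..N-1} \<times> {1..N-1}. g y)"
    by (rule sum_mono2[OF _ sub]) (auto simp: g_def intro: mult_nonneg_nonneg u0)
  also have "\<dots> = (\<Sum>s\<in>{1..N-1}. u s)^3"
    by (simp add: g_def power3_eq_cube sum_product sum.cartesian_product sum_distrib_left sum_distrib_right mult.assoc)
      (rule sum.cong; auto simp: case_prod_unfold)
  finally show ?thesis .
qed



definition uu :: "real \<Rightarrow> real \<Rightarrow> nat \<Rightarrow> real" where "uu G r s = bm G s * r ^ s"
definition PP :: "real \<Rightarrow> real \<Rightarrow> nat \<Rightarrow> real" where "PP G r N = (\<Sum>s\<in>{1..N}. uu G r s)"

lemma uu_nonneg: "G \<ge> 0 \<Longrightarrow> r \<ge> 0 \<Longrightarrow> uu G r s \<ge> 0"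
  unfolding uu_def by (simp add: bm_nonneg)

lemma uu_rec: assumes "s \<ge> 2"
  shows "uu G r s = kap s * (\<Sum>m\<in>{0<..<s}. uu G r m * uu G r (s - m))
     + (1/6) * (\<Sum>c\<in>Comp s. uu G r (fst c) * uu G r (fst (snd c)) * uu G r (snd (snd c)))"
proof -
  have a: "(\<Sum>m\<in>{0<..<s}. uu G r m * uu G r (s - m)) = (\<Sum>m\<in>{0<..<s}. bm G m * bm G (s - m)) * r ^ s"
    unfolding sum_distrib_right uu_def
  proof (rule sum.cong[OF refl])
    fix m assume "m \<in> {0<..<s}"
    hence "r ^ s = r ^ m * r ^ (s - m)" by (simp flip: power_add)
    thus "bm G m * r ^ m * (bm G (s - m) * r ^ (s - m)) = bm G m * bm G (s - m) * r ^ s" by simp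
  qed
  have b: "(\<Sum>c\<in>Comp s. uu G r (fst c) * uu G r (fst (snd c)) * uu G r (snd (snd c)))
      = (\<Sum>c\<in>Comp s. bm G (fst c) * bm G (fst (snd c)) * bm G (snd (snd c))) * r ^ s"
    unfolding sum_distrib_right uu_def
  proof (rule sum.cong[OF refl])
    fix c assume "c \<in> Comp s"
    hence "r ^ s = r ^ fst c * r ^ fst (snd c) * r ^ snd (snd c)" by (auto simp: Comp_def simp flip: power_add)
    thus "bm G (fst c) * r ^ fst c * (bm G (fst (snd c)) * r ^ fst (snd c)) * (bm G (snd (snd c)) * r ^ snd (snd c))
        = bm G (fst c) * bm G (fst (snd c)) * bm G (snd (snd c)) * r ^ s" by simp
  qed
  show ?thesis unfolding a b by (subst uu_def, subst bm_ge2[OF assms]) (simp add: algebra_simps)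
qed

lemma REC:
  assumes G: "G \<ge> 0" and r: "r \<ge> 0" and N: "N \<ge> 3"
  shows "PP G r N \<le> G * r + (sqrt 2 / 2) * PP G r (N - 1) ^ 2 + PP G r (N - 1) ^ 3 / 6
           - (sqrt 2 - 1) * ((G * r)^2 / 2 + (G * r)^3 / 3)"
proof -
  define u where "u = uu G r"
  have u0: "u n \<ge> 0" for n unfolding u_def by (rule uu_nonneg[OF G r])
  define Qt where "Qt s = (\<Sum>m\<in>{0<..<s}. u m * u (s - m))" for s
  define Kt where "Kt s = (\<Sum>c\<in>Comp s. u (fst c) * u (fst (snd c)) * u (snd (snd c)))" for s
  have Qt0: "Qt s \<ge> 0" for s unfolding Qt_def by (intro sum_nonneg mult_nonneg_nonneg u0)
  have "{1..N} = insert 1 {2..N}" using N by auto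
  hence "PP G r N = u 1 + (\<Sum>s\<in>{2..N}. u s)" unfolding PP_def u_def by simp
  also have "(\<Sum>s\<in>{2..N}. u s) = (\<Sum>s\<in>{2..N}. kap s * Qt s + (1/6) * Kt s)"
    unfolding u_def Qt_def Kt_def by (intro sum.cong refl uu_rec) auto
  also have "\<dots> = (\<Sum>s\<in>{2..N}. (sqrt 2 / 2) * Qt s - (sqrt 2 - 1) * (Qt s / real s) + (1/6) * Kt s)"
    unfolding kap_def by (intro sum.cong refl) (simp add: left_diff_distrib)
  also have "\<dots> = (sqrt 2 / 2) * (\<Sum>s\<in>{2..N}. Qt s) - (sqrt 2 - 1) * (\<Sum>s\<in>{2..N}. Qt s / real s)
       + (1/6) * (\<Sum>s\<in>{2..N}. Kt s)"
    by (simp only: sum.distrib sum_subtractf sum_distrib_left)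
  finally have e: "PP G r N = u 1 + (sqrt 2 / 2) * (\<Sum>s\<in>{2..N}. Qt s) - (sqrt 2 - 1) * (\<Sum>s\<in>{2..N}. Qt s / real s)
       + (1/6) * (\<Sum>s\<in>{2..N}. Kt s)" by simp
  have u1: "u 1 = G * r" unfolding u_def uu_def by (simp add: bm_1 bm_Suc0)
  have u2: "u 2 = (G * r)^2 / 2" unfolding u_def uu_def by (simp add: bm_2 power_mult_distrib)
  have Q2: "Qt 2 = (G * r)^2"
  proof -
    have "{0<..<2::nat} = {1}" by auto
    thus ?thesis unfolding Qt_def using u1 by (simp add: power2_eq_square)
  qed
  have Q3: "Qt 3 = (G * r)^3"
  proof -
    have "{0<..<3::nat} = {1,2}" by auto
    hence "Qt 3 = u 1 * u 2 + u 2 * u 1" unfolding Qt_def by simp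
    thus ?thesis using u1 u2 by (simp add: power2_eq_square power3_eq_cube)
  qed
  have low: "(\<Sum>s\<in>{2..N}. Qt s / real s) \<ge> (G * r)^2 / 2 + (G * r)^3 / 3"
  proof -
    have "(\<Sum>s\<in>{2,3}. Qt s / real s) \<le> (\<Sum>s\<in>{2..N}. Qt s / real s)"
      by (rule sum_mono2) (use N Qt0 in auto)
    thus ?thesis using Q2 Q3 by simp
  qed
  have A: "(\<Sum>s\<in>{2..N}. Qt s) \<le> PP G r (N - 1) ^ 2"
    unfolding Qt_def PP_def u_def by (rule sumA[OF uu_nonneg[OF G r]])
  have B: "(\<Sum>s\<in>{2..N}. Kt s) \<le> PP G r (N - 1) ^ 3"
    unfolding Kt_def PP_def u_def by (rule sumB[OF uu_nonneg[OF G r]])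
  have d0: "sqrt 2 - 1 \<ge> 0" by (simp add: real_le_rsqrt)
  have c0: "sqrt 2 / 2 \<ge> 0" by simp
  have "(sqrt 2 / 2) * (\<Sum>s\<in>{2..N}. Qt s) \<le> (sqrt 2 / 2) * PP G r (N - 1) ^ 2"
    by (rule mult_left_mono[OF A c0])
  moreover have "(sqrt 2 - 1) * ((G * r)^2 / 2 + (G * r)^3 / 3) \<le> (sqrt 2 - 1) * (\<Sum>s\<in>{2..N}. Qt s / real s)"
    by (rule mult_left_mono[OF low d0])
  ultimately show ?thesis using e u1 B by linarith
qed


declare bm_Suc0[simp]

lemma sqrt2_ub: "sqrt 2 \<le> 141422/100000"
  by (rule real_le_lsqrt) (auto simp: power2_eq_square)
lemma sqrt2_lb: "141421/100000 \<le> sqrt 2"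
  by (rule real_le_rsqrt) (auto simp: power2_eq_square)
lemma Tc_ub: "Tc_tilde \<le> (1663/5000)"
proof -
  have "208162/100000 \<le> sqrt (13/3)" by (rule real_le_rsqrt) (auto simp: power2_eq_square)
  thus ?thesis unfolding Tc_tilde_def using sqrt2_ub by linarith
qed

lemma bm_zero: "bm 0 s = 0"
proof (induction s rule: less_induct)
  case (less s)
  show ?case
  proof (cases "s \<ge> 2")
    case True
    have "(\<Sum>m\<in>{0<..<s}. bm 0 m * bm 0 (s - m)) = 0" by (intro sum.neutral) (use less in auto)
    moreover have "(\<Sum>c\<in>Comp s. bm 0 (fst c) * bm 0 (fst (snd c)) * bm 0 (snd (snd c))) = 0"
      by (intro sum.neutral) (use less in \<open>auto simp: Comp_def\<close>)
    ultimately show ?thesis unfolding bm_ge2[OF True] by simp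
  next
    case False
    then have "s = 0 \<or> s = 1" by auto
    then show ?thesis by (auto simp: bm_0 bm_1 bm_Suc0)
  qed
qed

lemma PP_nonneg: "G \<ge> 0 \<Longrightarrow> r \<ge> 0 \<Longrightarrow> PP G r N \<ge> 0"
  unfolding PP_def by (intro sum_nonneg uu_nonneg)

lemma PP_mono: "G \<ge> 0 \<Longrightarrow> 0 \<le> r \<Longrightarrow> r \<le> r' \<Longrightarrow> PP G r N \<le> PP G r' N"
  unfolding PP_def uu_def
  by (intro sum_mono mult_left_mono power_mono bm_nonneg) auto

lemma PSB_exact:
  assumes G: "G \<ge> 0" and r: "r \<ge> 0" and x: "G * r = (1663/5000)"
  shows "PP G r N \<le> 29/50"
proof (induction N rule: less_induct)
  case (less N)
  show ?case
  proof (cases "N \<ge> 3")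
    case True
    define y where "y = PP G r (N - 1)"
    have y0: "y \<ge> 0" unfolding y_def by (rule PP_nonneg[OF G r])
    have y1: "y \<le> 29/50" unfolding y_def using True by (intro less) auto
    have "y^2 \<le> (29/50)^2" by (rule power_mono[OF y1 y0])
    moreover have "y^3 \<le> (29/50)^3" by (rule power_mono[OF y1 y0])
    moreover have "sqrt 2 / 2 \<ge> 0" by simp
    ultimately have yy: "(sqrt 2 / 2) * y^2 \<le> (sqrt 2 / 2) * (29/50)^2" "y^3 / 6 \<le> (29/50)^3 / 6"
      by (auto intro: mult_left_mono)
    have "PP G r N \<le> G * r + (sqrt 2 / 2) * y ^ 2 + y ^ 3 / 6 - (sqrt 2 - 1) * ((G * r)^2 / 2 + (G * r)^3 / 3)"
      unfolding y_def by (rule REC[OF G r True])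
    also have "\<dots> \<le> (1663/5000) + (sqrt 2 / 2) * (29/50)^2 + (29/50)^3 / 6 - (sqrt 2 - 1) * ((1663/5000)^2 / 2 + (1663/5000)^3 / 3)"
      unfolding x using yy by linarith
    also have "\<dots> \<le> 29/50" using sqrt2_ub by (simp add: power2_eq_square power3_eq_cube field_simps)
    finally show ?thesis .
  next
    case False
    then have "N = 0 \<or> N = 1 \<or> N = 2" by auto
    moreover have "PP G r 1 = G * r" unfolding PP_def uu_def by (simp add: bm_1)
    moreover have "PP G r 2 = G * r + (G * r)^2 / 2"
    proof -
      have "{1..2::nat} = {1,2}" by auto
      thus ?thesis unfolding PP_def uu_def by (simp add: bm_1 bm_2 power_mult_distrib)
    qed
    ultimately show ?thesis unfolding x by (auto simp: PP_def power2_eq_square)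
  qed
qed

lemma PSB:
  assumes G: "G \<ge> 0" and r: "r \<ge> 0" and x: "G * r \<le> (1663/5000)"
  shows "PP G r N \<le> 29/50"
proof (cases "G = 0")
  case True
  then show ?thesis unfolding PP_def uu_def by (simp add: bm_zero)
next
  case False
  hence Gp: "G > 0" using G by simp
  define r' where "r' = (1663/5000) / G"
  have "r \<le> r'" unfolding r'_def using x Gp by (simp add: field_simps)
  hence "PP G r N \<le> PP G r' N" by (intro PP_mono G r)
  also have "\<dots> \<le> 29/50" by (rule PSB_exact[OF G]) (use Gp in \<open>auto simp: r'_def\<close>)
  finally show ?thesis .
qed

lemma bm_summable:
  assumes G: "G \<ge> 0" and r: "r \<ge> 0" and x: "G * r \<le> (1663/5000)"
  shows "summable (\<lambda>s. bm G s * r ^ s)"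
proof (rule summableI_nonneg_bounded)
  show "0 \<le> bm G s * r ^ s" for s using bm_nonneg[OF G] r by simp
  fix n
  have "(\<Sum>s<n. bm G s * r ^ s) \<le> (\<Sum>s\<in>{..n}. bm G s * r ^ s)"
    by (rule sum_mono2) (use bm_nonneg[OF G] r in auto)
  also have "{..n} = insert 0 {1..n}" by auto
  hence "(\<Sum>s\<in>{..n}. bm G s * r ^ s) = PP G r n" unfolding PP_def uu_def by (simp add: bm_0)
  finally show "(\<Sum>s<n. bm G s * r ^ s) \<le> 29/50" using PSB[OF G r x, of n] by linarith
qed



lemma rvec_zero: "rvec 0 = 0" by (simp add: rvec_def vec_eq_iff)

lemma norm_rvec_ge1: assumes "p \<noteq> 0" shows "norm (rvec p) \<ge> 1"
proof -
  have sq: "real_of_int z ^ 2 \<ge> 1" if "z \<noteq> 0" for z :: int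
  proof -
    have "\<bar>z\<bar> \<ge> 1" using that by linarith
    hence a: "1 \<le> \<bar>real_of_int z\<bar>" by linarith
    have "1 \<le> \<bar>real_of_int z\<bar> ^ 2" using one_le_power[OF a] .
    thus ?thesis by simp
  qed
  have disj: "p$1 \<noteq> 0 \<or> p$2 \<noteq> 0 \<or> p$3 \<noteq> 0" using assms by (auto simp: vec_eq_iff forall_3)
  have nn: "0 \<le> real_of_int (p$k)^2" for k by simp
  have "real_of_int (p$1)^2 + real_of_int (p$2)^2 + real_of_int (p$3)^2 \<ge> 1"
    using disj
  proof (elim disjE)
    assume h: "p$1 \<noteq> 0" show ?thesis using sq[OF h] nn[of 2] nn[of 3] by linarith
  next
    assume h: "p$2 \<noteq> 0" show ?thesis using sq[OF h] nn[of 1] nn[of 3] by linarith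
  next
    assume h: "p$3 \<noteq> 0" show ?thesis using sq[OF h] nn[of 2] nn[of 1] by linarith
  qed
  hence "norm (rvec p)^2 \<ge> 1" unfolding normr2 .
  thus ?thesis using power2_le_imp_le[of 1 "norm (rvec p)"] by simp
qed

lemma norm_smult3: "norm (c *s (v::complex^3)) = cmod c * norm v"
proof -
  have "norm (c *s v)^2 = (cmod c * norm v)^2"
    unfolding power_mult_distrib normv2 by (simp add: norm_mult power_mult_distrib algebra_simps)
  thus ?thesis by (simp add: power2_eq_iff_nonneg)
qed

lemma norm_le_nf: assumes "X s 0 = 0" shows "norm (X s p) \<le> nf X s p"
proof (cases "p = 0")
  case True then show ?thesis using assms by (simp add: nf_def)
next
  case False
  then show ?thesis unfolding nf_def using mult_right_mono[OF norm_rvec_ge1[OF False] norm_ge_zero[of "X s p"]]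
    by simp
qed



lemma Comp_1: "Comp 1 = {}" "Comp (Suc 0) = {}" by (auto simp: Comp_def)
lemma empt1: "{0<..<Suc 0} = ({}::nat set)" by auto

lemma nf1:
  assumes zero_mean: "\<omega> 0 = 0"
    and xi_mean: "X 1 0 = 0"
    and curl: "\<And>p. p \<noteq> 0 \<Longrightarrow> curl_hat (X 1) p = curl_rhs \<omega> X 1 p"
    and dv: "\<And>p. p \<noteq> 0 \<Longrightarrow> div_hat (X 1) p = div_rhs X 1 p"
  shows "nf X 1 p = norm (\<omega> p)"
proof (cases "p = 0")
  case True then show ?thesis using zero_mean by (simp add: nf_def rvec_zero)
next
  case False
  have c: "curl_rhs \<omega> X 1 p = \<omega> p" by (simp add: curl_rhs_def vec_eq_iff)
  have d: "div_rhs X 1 p = 0" unfolding div_split by (simp add: qdiv_def cdiv_def Comp_1 empt1)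
  show ?thesis unfolding nf_pair curl[OF False] dv[OF False] c d by simp
qed

theorem mainTheorem2:
  fixes \<omega> :: vcoef and X :: "nat \<Rightarrow> vcoef" and \<Gamma> :: real
  assumes zero_mean: "\<omega> 0 = 0"
    and div_free: "\<And>p. (\<Sum>k\<in>UNIV. of_int (p $ k) * (\<omega> p $ k)) = 0"
    and real_field: "\<And>p. \<omega> (- p) = (\<chi> k. cnj (\<omega> p $ k))"
    and abs_summable: "(\<lambda>p. norm (\<omega> p)) summable_on UNIV"
    and Gamma_def: "\<Gamma> = (\<Sum>\<^sub>\<infinity>p. norm (\<omega> p))"
    and xi_mean: "\<And>s. s \<ge> 1 \<Longrightarrow> X s 0 = 0"
    and xi_curl: "\<And>s p. s \<ge> 1 \<Longrightarrow> p \<noteq> 0 \<Longrightarrow> curl_hat (X s) p = curl_rhs \<omega> X s p"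
    and xi_div: "\<And>s p. s \<ge> 1 \<Longrightarrow> p \<noteq> 0 \<Longrightarrow> div_hat (X s) p = div_rhs X s p"
  shows "\<forall>t::complex. norm t * \<Gamma> < Tc_tilde \<longrightarrow>
           ((\<lambda>(s, p). norm (rvec p) * norm (X s p) * norm t ^ s) summable_on ({1..} \<times> UNIV))
           \<and> (\<forall>a. summable (\<lambda>s. if s = 0 then 0 else (t ^ s) *s field_at (X s) a))"
proof (intro allI impI)
  fix t :: complex
  assume tG: "norm t * \<Gamma> < Tc_tilde"
  define A where "A s = infsum (nf X s) UNIV" for s
  have G0: "\<Gamma> \<ge> 0" unfolding Gamma_def by (intro infsum_nonneg) auto
  have A0: "A s \<ge> 0" for s unfolding A_def by (intro infsum_nonneg nf_nonneg)
  have nf1': "nf X 1 = (\<lambda>p. norm (\<omega> p))"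
    by (rule ext, rule nf1[OF zero_mean xi_mean xi_curl xi_div]) auto
  have IND: "nf X s summable_on UNIV \<and> A s \<le> bm \<Gamma> s" if "s \<ge> 1" for s
    using that
  proof (induction s rule: less_induct)
    case (less s)
    show ?case
    proof (cases "s = 1")
      case True
      have e: "nf X s = (\<lambda>p. norm (\<omega> p))" using nf1' True by simp
      have "A s = \<Gamma>" unfolding A_def e Gamma_def ..
      moreover have "bm \<Gamma> s = \<Gamma>" using True by (simp add: bm_1)
      ultimately show ?thesis using abs_summable e by simp
    next
      case False
      hence s2: "s \<ge> 2" using less.prems by simp
      have sm: "nf X m summable_on UNIV" if "1 \<le> m" "m < s" for m using less.IH that by blast
      have Am: "A m \<le> bm \<Gamma> m" if "1 \<le> m" "m < s" for m using less.IH that by blast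
      have cu: "curl_hat (X s) p = curl_rhs \<omega> X s p" if "p \<noteq> 0" for p using xi_curl s2 that by auto
      have du: "div_hat (X s) p = div_rhs X s p" if "p \<noteq> 0" for p using xi_div s2 that by auto
      have ST1: "nf X s summable_on UNIV"
        apply (rule STEP(1)[OF s2, of X \<omega>]) using sm cu du by auto
      have ST2: "infsum (nf X s) UNIV \<le> kap s * (\<Sum>m\<in>{0<..<s}. infsum (nf X m) UNIV * infsum (nf X (s - m)) UNIV)
          + (1/6) * (\<Sum>c\<in>Comp s. case c of (l,m,n) \<Rightarrow> infsum (nf X l) UNIV * infsum (nf X m) UNIV * infsum (nf X n) UNIV)"
        apply (rule STEP(2)[OF s2, of X \<omega>]) using sm cu du by auto
      have k0: "kap s \<ge> 0" using s2 by (intro kap_nonneg) auto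
      have q: "(\<Sum>m\<in>{0<..<s}. A m * A (s - m)) \<le> (\<Sum>m\<in>{0<..<s}. bm \<Gamma> m * bm \<Gamma> (s - m))"
        by (intro sum_mono mult_mono Am A0 bm_nonneg G0) auto
      have c: "(\<Sum>c\<in>Comp s. case c of (l,m,n) \<Rightarrow> A l * A m * A n)
          \<le> (\<Sum>c\<in>Comp s. bm \<Gamma> (fst c) * bm \<Gamma> (fst (snd c)) * bm \<Gamma> (snd (snd c)))"
      proof (rule sum_mono)
        fix c assume "c \<in> Comp s"
        then obtain l m n where cl: "c = (l,m,n)" "1 \<le> l" "l < s" "1 \<le> m" "m < s" "1 \<le> n" "n < s"
          by (cases c) (auto simp: Comp_def)
        show "(case c of (l,m,n) \<Rightarrow> A l * A m * A n) \<le> bm \<Gamma> (fst c) * bm \<Gamma> (fst (snd c)) * bm \<Gamma> (snd (snd c))"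
          unfolding cl(1) by (simp, intro mult_mono Am A0 bm_nonneg G0 mult_nonneg_nonneg) (use cl in auto)
      qed
      have "A s \<le> kap s * (\<Sum>m\<in>{0<..<s}. A m * A (s - m)) + (1/6) * (\<Sum>c\<in>Comp s. case c of (l,m,n) \<Rightarrow> A l * A m * A n)"
        using ST2 unfolding A_def .
      also have "\<dots> \<le> bm \<Gamma> s"
        unfolding bm_ge2[OF s2] using q c k0 by (intro add_mono mult_left_mono) auto
      finally show ?thesis using ST1 by simp
    qed
  qed
  define r where "r = norm t"
  have r0: "r \<ge> 0" unfolding r_def by simp
  have x: "\<Gamma> * r \<le> 1663/5000" using tG Tc_ub unfolding r_def by (simp add: mult.commute)
  have bs: "summable (\<lambda>s. bm \<Gamma> s * r ^ s)" by (rule bm_summable[OF G0 r0 x])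
  have Ar: "A s * r ^ s \<le> bm \<Gamma> s * r ^ s" if "s \<ge> 1" for s
    using IND[OF that] r0 by (intro mult_right_mono) auto
  define g where "g s = A s * r ^ s" for s
  have g0: "g s \<ge> 0" for s unfolding g_def using A0 r0 by simp
  have gs': "summable (\<lambda>s. if s \<ge> 1 then g s else 0)"
  proof (rule summable_comparison_test'[OF bs])
    fix n :: nat
    show "norm (if n \<ge> 1 then g n else 0) \<le> bm \<Gamma> n * r ^ n"
      using Ar[of n] g0[of n] bm_nonneg[OF G0, of n] r0 unfolding g_def by auto
  qed
  have "(\<lambda>s. if s \<ge> 1 then g s else 0) summable_on UNIV"
    using gs' summable_on_UNIV_nonneg_real_iff[of "\<lambda>s. if s \<ge> 1 then g s else 0"] g0 by auto
  hence "(\<lambda>s. if s \<ge> 1 then g s else 0) summable_on {1..}"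
    by (rule summable_on_subset_banach) auto
  hence gs: "g summable_on {1..}" by (rule summable_on_cong[THEN iffD1, rotated]) auto
  have part1: "(\<lambda>(s, p). norm (rvec p) * norm (X s p) * norm t ^ s) summable_on ({1..} \<times> UNIV)"
  proof (rule summable_on_SigmaI[OF _ gs])
    fix s :: nat assume s: "s \<in> {1..}"
    have "(nf X s has_sum A s) UNIV" using IND[of s] s unfolding A_def by auto
    hence "((\<lambda>p. nf X s p * r ^ s) has_sum (A s * r ^ s)) UNIV" by (rule has_sum_cmult_left)
    thus "((\<lambda>p. case (s, p) of (s, p) \<Rightarrow> norm (rvec p) * norm (X s p) * norm t ^ s) has_sum g s) UNIV"
      unfolding g_def nf_def r_def by simp
  next
    fix s p show "0 \<le> (case (s, p) of (s, p) \<Rightarrow> norm (rvec p) * norm (X s p) * norm t ^ s)" by simp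
  qed
  have part2: "summable (\<lambda>s. if s = 0 then 0 else (t ^ s) *s field_at (X s) a)" for a
  proof (rule summable_comparison_test'[OF bs])
    fix s :: nat
    show "norm (if s = 0 then 0 else (t ^ s) *s field_at (X s) a) \<le> bm \<Gamma> s * r ^ s"
    proof (cases "s = 0")
      case True then show ?thesis using bm_nonneg[OF G0, of s] r0 by simp
    next
      case False
      hence s1: "s \<ge> 1" by simp
      have ns: "nf X s summable_on UNIV" using IND[OF s1] by simp
      have nb: "norm (exp (\<i> * of_real (pdot p a)) *s X s p) \<le> nf X s p" for p
        unfolding norm_smult3 using norm_le_nf[of X s p, OF xi_mean[OF s1]] by simp
      have sn: "(\<lambda>p. norm (exp (\<i> * of_real (pdot p a)) *s X s p)) summable_on UNIV"
        by (rule summable_on_comparison_test[OF ns]) (use nb in auto)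
      have "norm (field_at (X s) a) \<le> infsum (\<lambda>p. norm (exp (\<i> * of_real (pdot p a)) *s X s p)) UNIV"
        unfolding field_at_def by (rule norm_infsum_bound[OF sn])
      also have "\<dots> \<le> A s" unfolding A_def by (rule infsum_mono[OF sn ns nb])
      finally have "norm (field_at (X s) a) \<le> A s" .
      hence "norm ((t ^ s) *s field_at (X s) a) \<le> r ^ s * A s"
        unfolding norm_smult3 r_def by (simp add: norm_power mult_left_mono)
      also have "\<dots> \<le> bm \<Gamma> s * r ^ s" using Ar[OF s1] by (simp add: mult.commute)
      finally show ?thesis using False by simp
    qed
  qed
  show "(\<lambda>(s, p). norm (rvec p) * norm (X s p) * norm t ^ s) summable_on ({1..} \<times> UNIV) \<and>
      (\<forall>a. summable (\<lambda>s. if s = 0 then 0 else (t ^ s) *s field_at (X s) a))"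
    using part1 part2 by blast
qed

end
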